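(* Let $G$ be a connected threshold graph with binary string $b=0^{s_1}1^{t_1}\cdots 0^{s_k}1^{t_k}$ (all $s_i,t_i\geq1$). Let $s=\sum_{i=1}^k s_i$, $t=\sum_{i=1}^k t_i$, and $n=s+t$ the number of vertices of $G$. (i) If $s_1\geq 2$, then $\lambda_i(G)\leq \lambda_i(A_{2k+1})<-1$ for $i=1,\ldots,k$, and $0<\lambda_{k+1+i}(A_{2k+1})\leq \lambda_{n-k+i}(G)$ for $i=1,\ldots,k$. Consequently $m_{-1}(G)=t-k$ and $m_0(G)=s-k$, and $G$ has $k$ non-trivial negative and $k$ non-trivial positive eigenvalues. (ii) If $s_1=1$, then $\lambda_i(G)\leq\lambda_i(A_{2k})<-1$ for $i=1,\ldots,k-1$, and $0<\lambda_{k+i}(A_{2k})\leq\lambda_{n-k+i}(G)$ for $i=1,\ldots,k$. Consequently $m_{-1}(G)=t-k+1$ and $m_0(G)=s-k$, and $G$ has $k-1$ non-trivial negative and $k$ non-trivial positive eigenvalues. In either case, $G$ has inertia $(t,\,s-k,\,k)$.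
   Context: Eigenvalues of a graph $H$ on $m$ vertices are those of its $(0,1)$-adjacency matrix, ordered $\lambda_1(H)\leq\cdots\leq\lambda_m(H)$; $m_\lambda(H)$ is the algebraic multiplicity of $\lambda$. An eigenvalue is non-trivial if it is not in $\{-1,0\}$. The inertia of $H$ is the triple (number of negative eigenvalues, number of zero eigenvalues, number of positive eigenvalues). Threshold graphs from binary strings: given $b=b_1\cdots b_n\in\{0,1\}^n$ with $b_1=0$, start with a single vertex and for $j=2,\ldots,n$ add a new vertex adjacent to all previous vertices if $b_j=1$ and isolated if $b_j=0$; the result is $G(b)$, and $b$ is its binary string. $0^s$ (resp. $1^t$) denotes $s$ consecutive zeros (resp. $t$ consecutive ones). The anti-regular graph $A_m$ is $G(b)$ with $b=0101\cdots01$ (length $m$) for $m$ even and $b=00101\cdots01$ (length $m$) for $m$ odd. *)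

theory Defs
  imports "Jordan_Normal_Form.Char_Poly" "HOL-Computational_Algebra.Polynomial_Factorial"
begin

text \<open>Threshold graph G(b) for a binary string b (list of 0/1 naturals), vertices 0..n-1
  (vertex j is the (j+1)-th added vertex). Adjacency matrix over the reals:
  i \<noteq> j adjacent iff the later of the two vertices was added as dominating (b ! max i j = 1).\<close>
definition threshold_adj :: "nat list \<Rightarrow> real mat" where
  "threshold_adj b = mat (length b) (length b)
     (\<lambda>(i, j). if i \<noteq> j \<and> b ! max i j = 1 then 1 else 0)"

text \<open>Binary string 0^{s_1} 1^{t_1} ... 0^{s_k} 1^{t_k} (blocks indexed 0..k-1).\<close>
definition block_string :: "nat \<Rightarrow> (nat \<Rightarrow> nat) \<Rightarrow> (nat \<Rightarrow> nat) \<Rightarrow> nat list" where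
  "block_string k s t = concat (map (\<lambda>i. replicate (s i) 0 @ replicate (t i) 1) [0..<k])"

definition antireg_string :: "nat \<Rightarrow> nat list" where
  "antireg_string m = (if even m then concat (replicate (m div 2) [0, 1])
                       else 0 # concat (replicate (m div 2) [0, 1]))"

definition antireg_adj :: "nat \<Rightarrow> real mat" where
  "antireg_adj m = threshold_adj (antireg_string m)"

text \<open>Eigenvalues (with algebraic multiplicity) in nondecreasing order: the real roots of the
  characteristic polynomial (which splits for real symmetric matrices).\<close>
definition eigs :: "real mat \<Rightarrow> real list" where
  "eigs A = sorted_list_of_multiset (proots (char_poly A))"

definition eig :: "real mat \<Rightarrow> nat \<Rightarrow> real" where
  "eig A i = eigs A ! (i - 1)"

definition eig_mult :: "real \<Rightarrow> real mat \<Rightarrow> nat" where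
  "eig_mult x A = order x (char_poly A)"

definition inertia :: "real mat \<Rightarrow> nat \<times> nat \<times> nat" where
  "inertia A = (length (filter (\<lambda>x. x < 0) (eigs A)),
                length (filter (\<lambda>x. x = 0) (eigs A)),
                length (filter (\<lambda>x. x > 0) (eigs A)))"

definition nontriv_neg :: "real mat \<Rightarrow> nat" where
  "nontriv_neg A = length (filter (\<lambda>x. x < 0 \<and> x \<noteq> -1) (eigs A))"

definition nontriv_pos :: "real mat \<Rightarrow> nat" where
  "nontriv_pos A = length (filter (\<lambda>x. x > 0) (eigs A))"

end

theory Submission
  imports Defs "Jordan_Normal_Form.Jordan_Normal_Form_Existence" "Jordan_Normal_Form.Jordan_Normal_Form_Uniqueness"
begin

definition symm :: "nat \<Rightarrow> real mat \<Rightarrow> bool" where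
  "symm n A \<longleftrightarrow> A \<in> carrier_mat n n \<and> (\<forall>i<n. \<forall>j<n. A $$ (i,j) = A $$ (j,i))"

lemma symm_real_eig:
  fixes A :: "real mat"
  assumes S: "symm n A" and a: "poly (char_poly (map_mat complex_of_real A)) a = 0"
  shows "Im a = 0"
proof -
  let ?Ac = "map_mat complex_of_real A"
  have A: "A \<in> carrier_mat n n" using S unfolding symm_def by auto
  have Ac: "?Ac \<in> carrier_mat n n" using A by auto
  have "eigenvalue ?Ac a" using eigenvalue_root_char_poly[OF Ac] a by auto
  then obtain v where ev: "eigenvector ?Ac v a" unfolding eigenvalue_def by auto
  have v: "v \<in> carrier_vec n" "v \<noteq> 0\<^sub>v n" and Av: "?Ac *\<^sub>v v = a \<cdot>\<^sub>v v"
    using ev Ac unfolding eigenvector_def by auto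
  define s where "s = (\<Sum>i<n. cnj (v $ i) * (\<Sum>j<n. complex_of_real (A $$ (i,j)) * v $ j))"
  have s1: "s = a * (\<Sum>i<n. cnj (v $ i) * v $ i)"
  proof -
    have "\<And>i. i < n \<Longrightarrow> (\<Sum>j<n. complex_of_real (A $$ (i,j)) * v $ j) = a * v $ i"
    proof -
      fix i assume i: "i < n"
      have "(?Ac *\<^sub>v v) $ i = (a \<cdot>\<^sub>v v) $ i" using Av by simp
      thus "(\<Sum>j<n. complex_of_real (A $$ (i,j)) * v $ j) = a * v $ i"
        using i A v by (auto simp: mult_mat_vec_def scalar_prod_def lessThan_atLeast0 intro!: sum.cong)
    qed
    hence "s = (\<Sum>i<n. cnj (v $ i) * (a * v $ i))" unfolding s_def by (auto intro!: sum.cong)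
    thus ?thesis by (simp add: sum_distrib_left algebra_simps)
  qed
  have s2: "cnj s = s"
  proof -
    have "cnj s = (\<Sum>i<n. \<Sum>j<n. v $ i * (complex_of_real (A $$ (i,j)) * cnj (v $ j)))"
      unfolding s_def by (simp add: sum_distrib_left)
    also have "\<dots> = (\<Sum>j<n. \<Sum>i<n. v $ i * (complex_of_real (A $$ (i,j)) * cnj (v $ j)))"
      by (rule sum.swap)
    also have "\<dots> = s" unfolding s_def using S unfolding symm_def
      by (auto simp: sum_distrib_left algebra_simps intro!: sum.cong)
    finally show ?thesis .
  qed
  define N where "N = (\<Sum>i<n. cnj (v $ i) * v $ i)"
  have NR: "N = complex_of_real (\<Sum>i<n. (cmod (v $ i))^2)"
    unfolding N_def of_real_sum by (intro sum.cong refl) (metis complex_norm_square mult.commute)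
  obtain i where i: "i < n" "v $ i \<noteq> 0" using v by (metis eq_vecI carrier_vecD index_zero_vec(1,2))
  have "(\<Sum>i<n. (cmod (v $ i))^2) > 0"
    by (rule sum_pos2[of _ i]) (use i in auto)
  hence N0: "Re N > 0" "Im N = 0" unfolding NR by auto
  have "Im (cnj s) = Im s" using s2 by simp
  hence "Im s = 0" by simp
  hence "Im (a * N) = 0" using s1 N_def by simp
  hence "Im a * Re N = 0" using N0 by simp
  thus ?thesis using N0 by simp
qed

lemma symm_carrier: "symm n A \<Longrightarrow> A \<in> carrier_mat n n" unfolding symm_def by auto

lemma symm_split:
  assumes S: "symm n A"
  shows "\<exists>es. char_poly A = (\<Prod>e\<leftarrow>es. [:-e, 1:]) \<and> length es = n"
proof -
  let ?Ac = "map_mat complex_of_real A"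
  have A: "A \<in> carrier_mat n n" using S by (rule symm_carrier)
  have Ac: "?Ac \<in> carrier_mat n n" using A by auto
  obtain as where cas: "char_poly ?Ac = (\<Prod>a\<leftarrow>as. [:-a, 1:])" "length as = n"
    using char_poly_factorized[OF Ac] by auto
  have re: "complex_of_real (Re a) = a" if a: "a \<in> set as" for a
  proof -
    have "poly (char_poly ?Ac) a = 0" unfolding cas(1) poly_prod_list_zero_iff using a
      by (auto intro!: bexI[of _ "[:-a,1:]"])
    from symm_real_eig[OF S this] show ?thesis by (simp add: complex_eq_iff)
  qed
  interpret mp: map_poly_inj_comm_ring_hom "complex_of_real" ..
  have "map_poly complex_of_real (\<Prod>e\<leftarrow>map Re as. [:-e, 1:]) = (\<Prod>a\<leftarrow>as. [:-a, 1:])"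
    unfolding mp.hom_prod_list map_map
    by (rule arg_cong[of _ _ prod_list], rule map_cong[OF refl], simp add: re)
  also have "\<dots> = map_poly complex_of_real (char_poly A)"
    using of_real_hom.char_poly_hom[OF A] cas(1) by metis
  finally have "char_poly A = (\<Prod>e\<leftarrow>map Re as. [:-e, 1:])" by simp
  thus ?thesis using cas by (intro exI[of _ "map Re as"]) auto
qed

lemma symm_mat_vec_sprod:
  assumes S: "symm n M" and x: "x \<in> carrier_vec n" and y: "y \<in> carrier_vec n"
  shows "(M *\<^sub>v x) \<bullet> y = x \<bullet> (M *\<^sub>v y)"
proof -
  have M: "M \<in> carrier_mat n n" using S by (rule symm_carrier)
  have "(M *\<^sub>v x) \<bullet> y = (\<Sum>i<n. (\<Sum>j<n. M $$ (i,j) * x $ j) * y $ i)"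
    using M x y by (auto simp: scalar_prod_def lessThan_atLeast0 row_def intro!: sum.cong)
  also have "\<dots> = (\<Sum>i<n. \<Sum>j<n. M $$ (i,j) * x $ j * y $ i)" by (simp add: sum_distrib_right)
  also have "\<dots> = (\<Sum>j<n. \<Sum>i<n. M $$ (i,j) * x $ j * y $ i)" by (rule sum.swap)
  also have "\<dots> = (\<Sum>j<n. x $ j * (\<Sum>i<n. M $$ (j,i) * y $ i))"
    using S unfolding symm_def by (auto simp: sum_distrib_left algebra_simps intro!: sum.cong)
  also have "\<dots> = x \<bullet> (M *\<^sub>v y)"
    using M x y by (auto simp: scalar_prod_def lessThan_atLeast0 row_def intro!: sum.cong)
  finally show ?thesis .
qed

lemma symm_char_matrix: "symm n A \<Longrightarrow> symm n (char_matrix A e)"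
  unfolding symm_def char_matrix_def by auto

lemma real_sprod_self_0:
  fixes w :: "real vec"
  assumes "w \<in> carrier_vec n" "w \<bullet> w = 0"
  shows "w = 0\<^sub>v n"
proof -
  have "(\<Sum>i\<in>{0..<n}. w $ i * w $ i) = 0" using assms by (simp add: scalar_prod_def)
  hence "\<forall>i\<in>{0..<n}. w $ i * w $ i = 0"
    by (subst (asm) sum_nonneg_eq_0_iff) auto
  thus ?thesis using assms by (intro eq_vecI) auto
qed

lemma symm_kernel_sq:
  assumes S: "symm n A"
  shows "mat_kernel (char_matrix A e ^\<^sub>m 2) = mat_kernel (char_matrix A e ^\<^sub>m 1)"
proof -
  let ?M = "char_matrix A e"
  have SM: "symm n ?M" using S by (rule symm_char_matrix)
  have M: "?M \<in> carrier_mat n n" using SM by (rule symm_carrier)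
  have p1: "?M ^\<^sub>m 1 = ?M" using M by simp
  have p2: "?M ^\<^sub>m 2 = ?M * ?M" using M by (simp add: numeral_2_eq_2)
  show ?thesis
  proof (rule Set.set_eqI)
    fix v
    show "v \<in> mat_kernel (?M ^\<^sub>m 2) \<longleftrightarrow> v \<in> mat_kernel (?M ^\<^sub>m 1)"
    proof
      assume "v \<in> mat_kernel (?M ^\<^sub>m 2)"
      hence v: "v \<in> carrier_vec n" and z: "(?M * ?M) *\<^sub>v v = 0\<^sub>v n"
        unfolding p2 mat_kernel_def using M by auto
      have z2: "?M *\<^sub>v (?M *\<^sub>v v) = 0\<^sub>v n" using z M v by simp
      have w: "?M *\<^sub>v v \<in> carrier_vec n" using M v by simp
      have "(?M *\<^sub>v v) \<bullet> (?M *\<^sub>v v) = v \<bullet> (?M *\<^sub>v (?M *\<^sub>v v))"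
        by (rule symm_mat_vec_sprod[OF SM v w])
      also have "\<dots> = 0" unfolding z2 using v by simp
      finally have "?M *\<^sub>v v = 0\<^sub>v n" using real_sprod_self_0[OF w] by simp
      thus "v \<in> mat_kernel (?M ^\<^sub>m 1)" unfolding p1 mat_kernel_def using M v by auto
    next
      assume "v \<in> mat_kernel (?M ^\<^sub>m 1)"
      hence v: "v \<in> carrier_vec n" and z: "?M *\<^sub>v v = 0\<^sub>v n"
        unfolding p1 mat_kernel_def using M by auto
      have "(?M * ?M) *\<^sub>v v = ?M *\<^sub>v (?M *\<^sub>v v)" using M v by simp
      also have "\<dots> = 0\<^sub>v n" unfolding z using M by (intro eq_vecI) auto
      finally have "(?M * ?M) *\<^sub>v v = 0\<^sub>v n" .
      thus "v \<in> mat_kernel (?M ^\<^sub>m 2)" unfolding p2 mat_kernel_def using M v by auto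
    qed
  qed
qed

lemma sum_list_map_strict_mono:
  fixes f g :: "'a \<Rightarrow> nat"
  assumes "\<forall>x\<in>set xs. f x \<le> g x" "x0 \<in> set xs" "f x0 < g x0"
  shows "sum_list (map f xs) < sum_list (map g xs)"
  using assms
proof (induct xs)
  case (Cons a xs)
  show ?case
  proof (cases "x0 = a")
    case True
    have "sum_list (map f xs) \<le> sum_list (map g xs)"
      using Cons(2) by (intro sum_list_mono) auto
    thus ?thesis using True Cons by simp
  next
    case False
    hence "sum_list (map f xs) < sum_list (map g xs)" using Cons by auto
    thus ?thesis using Cons(2) by simp
  qed
qed simp

lemma symm_jordan_sizes:
  assumes S: "symm n A" and J: "jordan_nf A n_as"
  shows "\<forall>x\<in>set n_as. fst x = 1"
proof (rule ccontr)
  assume "\<not> ?thesis"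
  then obtain s e where se: "(s,e) \<in> set n_as" "s \<noteq> 1" by auto
  have "s \<noteq> 0" using J se unfolding jordan_nf_def by force
  hence s2: "s \<ge> 2" using se by auto
  have "dim_gen_eigenspace A e 2 = dim_gen_eigenspace A e 1"
    unfolding dim_gen_eigenspace_def kernel_dim_def using symm_kernel_sq[OF S, of e]
    by (simp add: symm_carrier[OF S])
  hence eq: "(\<Sum> n \<leftarrow> map fst [(n, e')\<leftarrow>n_as . e' = e]. min 2 n) = (\<Sum> n \<leftarrow> map fst [(n, e')\<leftarrow>n_as . e' = e]. min 1 n)"
    unfolding dim_gen_eigenspace[OF J] .
  have "(\<Sum> n \<leftarrow> map fst [(n, e')\<leftarrow>n_as . e' = e]. min 1 n) < (\<Sum> n \<leftarrow> map fst [(n, e')\<leftarrow>n_as . e' = e]. min 2 n)"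
    by (rule sum_list_map_strict_mono[of _ _ _ s]) (use se s2 in force)+
  thus False using eq by simp
qed

lemma proots_linear_prod: "proots (\<Prod>a\<leftarrow>xs. [:-a, 1:]) = mset (xs :: real list)"
proof (induct xs)
  case (Cons a xs)
  have nz: "(\<Prod>a\<leftarrow>xs. [:-a, 1:]) \<noteq> (0 :: real poly)"
    by (auto simp: prod_list_zero_iff)
  have "proots (\<Prod>a\<leftarrow>a # xs. [:-a, 1:]) = proots ([:-a,1:] * (\<Prod>a\<leftarrow>xs. [:-a, 1:]))"
    by (simp only: prod_list.Cons list.map)
  also have "\<dots> = proots [:-a,1:] + proots (\<Prod>a\<leftarrow>xs. [:-a, 1:])"
    by (rule proots_mult[OF _ nz]) simp
  finally have "proots (\<Prod>a\<leftarrow>a # xs. [:-a, 1:]) = proots [:-a,1:] + proots (\<Prod>a\<leftarrow>xs. [:-a, 1:])" .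
  thus ?case using Cons by simp
qed simp

lemma jordan_matrix_diag:
  "\<forall>x\<in>set n_as. fst x = 1 \<Longrightarrow> jordan_matrix n_as
     = mat (length n_as) (length n_as) (\<lambda>(i,j). if i = j then snd (n_as ! i) else (0 :: 'a :: {zero,one}))"
proof (induct n_as)
  case Nil
  show ?case unfolding jordan_matrix_def by (intro eq_matI) auto
next
  case (Cons x n_as)
  obtain s a where x: "x = (s,a)" by force
  have s: "s = 1" using Cons(2) x by auto
  have IH: "jordan_matrix n_as = mat (length n_as) (length n_as) (\<lambda>(i,j). if i = j then snd (n_as ! i) else 0)"
    using Cons by auto
  have sl: "sum_list (map fst n_as) = length n_as" using Cons(2)
    by (induct n_as) auto
  show ?case unfolding x s jordan_matrix_Cons sl IH
    by (intro eq_matI) (auto simp: nth_Cons')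
qed

lemma symm_spectral:
  assumes S: "symm n A"
  obtains P :: "nat \<Rightarrow> nat \<Rightarrow> real" and d :: "nat \<Rightarrow> real" where
    "\<And>j i. j < n \<Longrightarrow> i < n \<Longrightarrow> (\<Sum>l<n. A $$ (i,l) * P j l) = d j * P j i"
    "\<And>c. (\<forall>i<n. (\<Sum>j<n. c j * P j i) = 0) \<Longrightarrow> \<forall>j<n. c j = 0"
    "proots (char_poly A) = mset (map d [0..<n])"
proof -
  have A: "A \<in> carrier_mat n n" using S by (rule symm_carrier)
  obtain es where es: "char_poly A = (\<Prod>e\<leftarrow>es. [:-e, 1:])" using symm_split[OF S] by auto
  obtain n_as where J: "jordan_nf A n_as" using jordan_nf_exists[OF A es] by auto
  have one: "\<forall>x\<in>set n_as. fst x = 1" by (rule symm_jordan_sizes[OF S J])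
  let ?J = "jordan_matrix n_as"
  have sim: "similar_mat A ?J" using J unfolding jordan_nf_def by auto
  from similar_matD[OF sim] obtain n' Pm Q where
    PQ: "{A, ?J, Pm, Q} \<subseteq> carrier_mat n' n'" "Pm * Q = 1\<^sub>m n'" "Q * Pm = 1\<^sub>m n'" "A = Pm * ?J * Q"
    by auto
  have n': "n' = n" using PQ(1) A by auto
  have Jc: "?J \<in> carrier_mat n n" and Pc: "Pm \<in> carrier_mat n n" and Qc: "Q \<in> carrier_mat n n"
    using PQ(1) n' by auto
  have "sum_list (map fst n_as) = length n_as" using one by (induct n_as) auto
  moreover from carrier_matD(1)[OF Jc] have "sum_list (map fst n_as) = n" by simp
  ultimately have ln: "length n_as = n" by simp
  define d where "d j = snd (n_as ! j)" for j
  have Jd: "?J = mat n n (\<lambda>(i,j). if i = j then d i else 0)"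
    unfolding jordan_matrix_diag[OF one] ln d_def ..
  have AP: "A * Pm = Pm * ?J"
  proof -
    have "A * Pm = (Pm * ?J * Q) * Pm" using PQ(4) by simp
    also have "\<dots> = Pm * ?J * (Q * Pm)" using Pc Jc Qc by (simp add: assoc_mult_mat[of _ n n _ n _ n])
    also have "\<dots> = Pm * ?J" unfolding PQ(3) n' by (rule right_mult_one_mat[OF mult_carrier_mat[OF Pc Jc]])
    finally show ?thesis .
  qed
  define P where "P j i = Pm $$ (i,j)" for j i
  show ?thesis
  proof
    fix j i assume j: "j < n" and i: "i < n"
    have "(A * Pm) $$ (i,j) = (\<Sum>l<n. A $$ (i,l) * P j l)"
      using A Pc i j by (auto simp: scalar_prod_def P_def lessThan_atLeast0 intro!: sum.cong)
    moreover have "(Pm * ?J) $$ (i,j) = d j * P j i"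
    proof -
      have "(Pm * ?J) $$ (i,j) = (\<Sum>l\<in>{0..<n}. Pm $$ (i,l) * (if l = j then d l else 0))"
        using Pc Jc i j unfolding Jd by (auto simp: scalar_prod_def intro!: sum.cong)
      also have "\<dots> = Pm $$ (i,j) * d j" using j by (simp add: if_distrib cong: if_cong)
      finally show ?thesis by (simp add: P_def)
    qed
    ultimately show "(\<Sum>l<n. A $$ (i,l) * P j l) = d j * P j i" using AP by simp
  next
    fix c assume c: "\<forall>i<n. (\<Sum>j<n. c j * P j i) = 0"
    let ?v = "vec n c"
    have v: "?v \<in> carrier_vec n" by simp
    have Pv: "Pm *\<^sub>v ?v = 0\<^sub>v n"
    proof (rule eq_vecI)
      fix i assume "i < dim_vec (0\<^sub>v n :: real vec)"
      hence i: "i < n" by simp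
      have "(Pm *\<^sub>v ?v) $ i = (\<Sum>j<n. c j * P j i)"
        using Pc i by (auto simp: scalar_prod_def P_def lessThan_atLeast0 intro!: sum.cong)
      thus "(Pm *\<^sub>v ?v) $ i = 0\<^sub>v n $ i" using c i by simp
    qed (use Pc in simp)
    have "?v = (Q * Pm) *\<^sub>v ?v" unfolding PQ(3) n' by simp
    also have "\<dots> = Q *\<^sub>v (Pm *\<^sub>v ?v)" using Qc Pc v by simp
    also have "\<dots> = 0\<^sub>v n" unfolding Pv using Qc by (intro eq_vecI) (auto simp: scalar_prod_def)
    finally have "?v = 0\<^sub>v n" .
    thus "\<forall>j<n. c j = 0" by (metis index_vec index_zero_vec(1))
  next
    have "char_poly A = char_poly ?J" by (rule char_poly_similar[OF sim])
    also have "\<dots> = (\<Prod>(s, a)\<leftarrow>n_as. [:- a, 1:] ^ s)" by (rule jordan_matrix_char_poly)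
    also have "\<dots> = (\<Prod>a\<leftarrow>map snd n_as. [:- a, 1:])" using one
      by (induct n_as) auto
    finally have "proots (char_poly A) = proots (\<Prod>a\<leftarrow>map snd n_as. [:- a, 1:])" by (rule arg_cong)
    also have "\<dots> = mset (map snd n_as)" by (rule proots_linear_prod)
    also have "map snd n_as = map d [0..<n]" unfolding d_def using ln
      by (intro nth_equalityI) auto
    finally show "proots (char_poly A) = mset (map d [0..<n])" .
  qed
qed



lemma many_vectors_dep_nat:
  fixes v :: "nat \<Rightarrow> nat \<Rightarrow> real"
  assumes nm: "n < m"
  shows "\<exists>c. (\<exists>j<m. c j \<noteq> 0) \<and> (\<forall>i<n. (\<Sum>j<m. c j * v j i) = 0)"
proof -
  define M where "M = mat m m (\<lambda>(i,j). if i < n then v j i else 0)"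
  have M: "M \<in> carrier_mat m m" unfolding M_def by simp
  have Mt: "transpose_mat M \<in> carrier_mat m m" using M by simp
  have "transpose_mat M *\<^sub>v unit_vec m n = 0\<^sub>v m"
  proof (rule eq_vecI)
    fix k assume "k < dim_vec (0\<^sub>v m :: real vec)"
    hence k: "k < m" by simp
    have "(transpose_mat M *\<^sub>v unit_vec m n) $ k = row (transpose_mat M) k \<bullet> unit_vec m n"
      using k M by simp
    also have "\<dots> = row (transpose_mat M) k $ n" using nm by (simp add: scalar_prod_right_unit)
    also have "\<dots> = 0" using k nm M unfolding M_def by simp
    finally show "(transpose_mat M *\<^sub>v unit_vec m n) $ k = 0\<^sub>v m $ k" using k by simp
  qed (use M in simp)
  moreover have "unit_vec m n \<noteq> (0\<^sub>v m :: real vec)"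
  proof
    assume "unit_vec m n = (0\<^sub>v m :: real vec)"
    hence "unit_vec m n $ n = (0\<^sub>v m :: real vec) $ n" by simp
    thus False using nm by simp
  qed
  ultimately have "det (transpose_mat M) = 0"
    using det_0_iff_vec_prod_zero_field[OF Mt] by (meson unit_vec_carrier)
  hence "det M = 0" using det_transpose[OF M] by simp
  then obtain w where w: "w \<in> carrier_vec m" "w \<noteq> 0\<^sub>v m" "M *\<^sub>v w = 0\<^sub>v m"
    using det_0_iff_vec_prod_zero_field[OF M] by auto
  have "\<exists>j<m. w $ j \<noteq> 0"
  proof (rule ccontr)
    assume "\<not> ?thesis"
    hence "w = 0\<^sub>v m" using w(1) by (intro eq_vecI) auto
    thus False using w(2) by simp
  qed
  moreover have "\<forall>i<n. (\<Sum>j<m. w $ j * v j i) = 0"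
  proof (intro allI impI)
    fix i assume i: "i < n"
    have "(M *\<^sub>v w) $ i = 0" using w(3) i nm by simp
    moreover have "(M *\<^sub>v w) $ i = (\<Sum>j<m. w $ j * v j i)"
      using i nm w(1) unfolding M_def
      by (auto simp: scalar_prod_def lessThan_atLeast0 row_def intro!: sum.cong)
    ultimately show "(\<Sum>j<m. w $ j * v j i) = 0" by simp
  qed
  ultimately show ?thesis by (intro exI[of _ "\<lambda>j. w $ j"]) auto
qed

lemma many_vectors_dep:
  fixes v :: "'k \<Rightarrow> nat \<Rightarrow> real"
  assumes K: "finite K" and nK: "n < card K"
  shows "\<exists>c. (\<exists>k\<in>K. c k \<noteq> 0) \<and> (\<forall>i<n. (\<Sum>k\<in>K. c k * v k i) = 0)"
proof -
  obtain h where h: "bij_betw h {0..<card K} K" using ex_bij_betw_nat_finite[OF K] by auto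
  obtain c where c: "\<exists>j<card K. c j \<noteq> 0" "\<forall>i<n. (\<Sum>j<card K. c j * v (h j) i) = 0"
    using many_vectors_dep_nat[OF nK, of "\<lambda>j. v (h j)"] by auto
  define c' where "c' k = c (inv_into {0..<card K} h k)" for k
  have inv: "inv_into {0..<card K} h (h j) = j" if "j < card K" for j
    using h that by (simp add: bij_betw_def inv_into_f_f)
  have "\<exists>k\<in>K. c' k \<noteq> 0"
  proof -
    obtain j where j: "j < card K" "c j \<noteq> 0" using c(1) by auto
    have "h j \<in> K" using h j(1) by (auto simp: bij_betw_def)
    moreover have "c' (h j) \<noteq> 0" using j inv unfolding c'_def by auto
    ultimately show ?thesis by blast
  qed
  moreover have "\<forall>i<n. (\<Sum>k\<in>K. c' k * v k i) = 0"
  proof (intro allI impI)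
    fix i assume i: "i < n"
    have "(\<Sum>k\<in>K. c' k * v k i) = (\<Sum>j\<in>{0..<card K}. c' (h j) * v (h j) i)"
      by (rule sum.reindex_bij_betw[OF h, symmetric])
    also have "\<dots> = (\<Sum>j<card K. c j * v (h j) i)"
      unfolding c'_def lessThan_atLeast0 by (intro sum.cong) (auto simp: inv)
    finally show "(\<Sum>k\<in>K. c' k * v k i) = 0" using c(2) i by simp
  qed
  ultimately show ?thesis by blast
qed

definition indep :: "nat \<Rightarrow> 'k set \<Rightarrow> ('k \<Rightarrow> nat \<Rightarrow> real) \<Rightarrow> bool" where
  "indep n K x \<longleftrightarrow> (\<forall>c. (\<forall>i<n. (\<Sum>k\<in>K. c k * x k i) = 0) \<longrightarrow> (\<forall>k\<in>K. c k = 0))"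

lemma common_vector:
  fixes x :: "'a \<Rightarrow> nat \<Rightarrow> real" and y :: "'b \<Rightarrow> nat \<Rightarrow> real"
  assumes I: "finite I" and J: "finite J" and card: "n < card I + card J"
    and ix: "indep n I x" and iy: "indep n J y"
  shows "\<exists>a b. (\<exists>i<n. (\<Sum>k\<in>I. a k * x k i) \<noteq> 0) \<and>
           (\<forall>i<n. (\<Sum>k\<in>I. a k * x k i) = (\<Sum>k\<in>J. b k * y k i))"
proof -
  define K where "K = Inl ` I \<union> Inr ` J"
  define v where "v k = (case k of Inl a \<Rightarrow> x a | Inr b \<Rightarrow> (\<lambda>i. - y b i))" for k
  have K: "finite K" unfolding K_def using I J by simp
  have cK: "card K = card I + card J" unfolding K_def
    by (subst card_Un_disjoint) (auto simp: I J card_image)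
  obtain c where c: "\<exists>k\<in>K. c k \<noteq> 0" "\<forall>i<n. (\<Sum>k\<in>K. c k * v k i) = 0"
    using many_vectors_dep[OF K, of n v] card cK by auto
  define a where "a k = c (Inl k)" for k
  define b where "b k = c (Inr k)" for k
  have split: "(\<Sum>k\<in>K. c k * v k i) = (\<Sum>k\<in>I. a k * x k i) - (\<Sum>k\<in>J. b k * y k i)" for i
  proof -
    have "(\<Sum>k\<in>K. c k * v k i) = (\<Sum>k\<in>Inl ` I. c k * v k i) + (\<Sum>k\<in>Inr ` J. c k * v k i)"
      unfolding K_def by (rule sum.union_disjoint) (auto simp: I J)
    also have "(\<Sum>k\<in>Inl ` I. c k * v k i) = (\<Sum>k\<in>I. a k * x k i)"
      by (subst sum.reindex) (auto simp: a_def v_def)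
    also have "(\<Sum>k\<in>Inr ` J. c k * v k i) = - (\<Sum>k\<in>J. b k * y k i)"
      by (subst sum.reindex) (auto simp: b_def v_def sum_negf)
    finally show ?thesis by simp
  qed
  have eq: "\<forall>i<n. (\<Sum>k\<in>I. a k * x k i) = (\<Sum>k\<in>J. b k * y k i)"
    using c(2) split by simp
  have "\<exists>i<n. (\<Sum>k\<in>I. a k * x k i) \<noteq> 0"
  proof (rule ccontr)
    assume "\<not> ?thesis"
    hence z1: "\<forall>i<n. (\<Sum>k\<in>I. a k * x k i) = 0" by auto
    hence z2: "\<forall>i<n. (\<Sum>k\<in>J. b k * y k i) = 0" using eq by simp
    have "\<forall>k\<in>I. a k = 0" using ix z1 unfolding indep_def by blast
    moreover have "\<forall>k\<in>J. b k = 0" using iy z2 unfolding indep_def by blast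
    ultimately have "\<forall>k\<in>K. c k = 0" unfolding K_def a_def b_def by auto
    thus False using c(1) by auto
  qed
  thus ?thesis using eq by blast
qed

definition ip :: "nat \<Rightarrow> (nat \<Rightarrow> real) \<Rightarrow> (nat \<Rightarrow> real) \<Rightarrow> real" where
  "ip n x y = (\<Sum>i<n. x i * y i)"

definition mv :: "nat \<Rightarrow> real mat \<Rightarrow> (nat \<Rightarrow> real) \<Rightarrow> nat \<Rightarrow> real" where
  "mv n A x i = (\<Sum>l<n. A $$ (i,l) * x l)"

definition lc :: "'k set \<Rightarrow> ('k \<Rightarrow> real) \<Rightarrow> ('k \<Rightarrow> nat \<Rightarrow> real) \<Rightarrow> nat \<Rightarrow> real" where
  "lc S c P i = (\<Sum>j\<in>S. c j * P j i)"

definition spec_data :: "nat \<Rightarrow> real mat \<Rightarrow> (nat \<Rightarrow> nat \<Rightarrow> real) \<Rightarrow> (nat \<Rightarrow> real) \<Rightarrow> bool" where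
  "spec_data n A P d \<longleftrightarrow> (\<forall>j<n. \<forall>i<n. mv n A (P j) i = d j * P j i) \<and> indep n {..<n} P"

lemma ip_mv_symm:
  assumes S: "symm n A"
  shows "ip n (mv n A u) w = ip n u (mv n A w)"
proof -
  have "ip n (mv n A u) w = (\<Sum>i<n. \<Sum>l<n. A $$ (i,l) * u l * w i)"
    unfolding ip_def mv_def by (simp add: sum_distrib_right)
  also have "\<dots> = (\<Sum>l<n. \<Sum>i<n. A $$ (i,l) * u l * w i)" by (rule sum.swap)
  also have "\<dots> = ip n u (mv n A w)"
    unfolding ip_def mv_def using S unfolding symm_def
    by (auto simp: sum_distrib_left algebra_simps intro!: sum.cong)
  finally show ?thesis .
qed

lemma ip_orth:
  assumes S: "symm n A" and u: "\<forall>i<n. mv n A u i = \<alpha> * u i" and w: "\<forall>i<n. mv n A w i = \<beta> * w i"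
    and ab: "\<alpha> \<noteq> \<beta>"
  shows "ip n u w = 0"
proof -
  have "\<alpha> * ip n u w = ip n (mv n A u) w" unfolding ip_def using u
    by (simp add: sum_distrib_left algebra_simps)
  also have "\<dots> = ip n u (mv n A w)" by (rule ip_mv_symm[OF S])
  also have "\<dots> = \<beta> * ip n u w" unfolding ip_def using w
    by (simp add: sum_distrib_left algebra_simps)
  finally show ?thesis using ab by simp
qed

lemma ip_sum_sum:
  "ip n (\<lambda>i. \<Sum>\<mu>\<in>M. g \<mu> i) (\<lambda>i. \<Sum>\<nu>\<in>N. h \<nu> i) = (\<Sum>\<mu>\<in>M. \<Sum>\<nu>\<in>N. ip n (g \<mu>) (h \<nu>))"
proof -
  have "ip n (\<lambda>i. \<Sum>\<mu>\<in>M. g \<mu> i) (\<lambda>i. \<Sum>\<nu>\<in>N. h \<nu> i) = (\<Sum>i<n. \<Sum>\<mu>\<in>M. \<Sum>\<nu>\<in>N. g \<mu> i * h \<nu> i)"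
    unfolding ip_def sum_product ..
  also have "\<dots> = (\<Sum>\<mu>\<in>M. \<Sum>i<n. \<Sum>\<nu>\<in>N. g \<mu> i * h \<nu> i)" by (rule sum.swap)
  also have "\<dots> = (\<Sum>\<mu>\<in>M. \<Sum>\<nu>\<in>N. \<Sum>i<n. g \<mu> i * h \<nu> i)" by (intro sum.cong refl sum.swap)
  finally show ?thesis unfolding ip_def .
qed

lemma ip_self_nonneg: "0 \<le> ip n x x"
  unfolding ip_def by (intro sum_nonneg) auto

lemma ip_self_pos: "(\<exists>i<n. x i \<noteq> 0) \<Longrightarrow> 0 < ip n x x"
  unfolding ip_def by (elim exE conjE, rule sum_pos2) (auto simp: zero_less_mult_iff)

lemma ray_sum:
  assumes S: "symm n A" and M: "finite M"
    and ev: "\<forall>\<mu>\<in>M. \<forall>i<n. mv n A (f \<mu>) i = \<mu> * f \<mu> i"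
  defines "X \<equiv> (\<lambda>i. \<Sum>\<mu>\<in>M. f \<mu> i)"
  shows "ip n X (mv n A X) = (\<Sum>\<mu>\<in>M. \<mu> * ip n (f \<mu>) (f \<mu>))"
    and "ip n X X = (\<Sum>\<mu>\<in>M. ip n (f \<mu>) (f \<mu>))"
proof -
  have orth: "ip n (f \<mu>) (f \<nu>) = 0" if "\<mu> \<in> M" "\<nu> \<in> M" "\<mu> \<noteq> \<nu>" for \<mu> \<nu>
    by (rule ip_orth[OF S]) (use ev that in auto)
  have mvX: "\<forall>i<n. mv n A X i = (\<Sum>\<nu>\<in>M. \<nu> * f \<nu> i)"
  proof (intro allI impI)
    fix i assume i: "i < n"
    have "mv n A X i = (\<Sum>\<nu>\<in>M. mv n A (f \<nu>) i)"
      unfolding mv_def X_def by (simp add: sum_distrib_left sum.swap[of _ M])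
    thus "mv n A X i = (\<Sum>\<nu>\<in>M. \<nu> * f \<nu> i)" using ev i by simp
  qed
  have "ip n X (mv n A X) = ip n X (\<lambda>i. \<Sum>\<nu>\<in>M. \<nu> * f \<nu> i)"
    unfolding ip_def using mvX by simp
  also have "\<dots> = (\<Sum>\<mu>\<in>M. \<Sum>\<nu>\<in>M. ip n (f \<mu>) (\<lambda>i. \<nu> * f \<nu> i))"
    unfolding X_def by (rule ip_sum_sum)
  also have "\<dots> = (\<Sum>\<mu>\<in>M. \<mu> * ip n (f \<mu>) (f \<mu>))"
  proof (rule sum.cong[OF refl])
    fix \<mu> assume mu: "\<mu> \<in> M"
    have "(\<Sum>\<nu>\<in>M. ip n (f \<mu>) (\<lambda>i. \<nu> * f \<nu> i)) = (\<Sum>\<nu>\<in>M. \<nu> * ip n (f \<mu>) (f \<nu>))"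
      unfolding ip_def by (simp add: sum_distrib_left algebra_simps)
    also have "\<dots> = \<mu> * ip n (f \<mu>) (f \<mu>)"
      by (subst sum.remove[OF M mu], subst sum.neutral) (use orth mu in auto)
    finally show "(\<Sum>\<nu>\<in>M. ip n (f \<mu>) (\<lambda>i. \<nu> * f \<nu> i)) = \<mu> * ip n (f \<mu>) (f \<mu>)" .
  qed
  finally show "ip n X (mv n A X) = (\<Sum>\<mu>\<in>M. \<mu> * ip n (f \<mu>) (f \<mu>))" .
  have "ip n X X = (\<Sum>\<mu>\<in>M. \<Sum>\<nu>\<in>M. ip n (f \<mu>) (f \<nu>))"
    unfolding X_def by (rule ip_sum_sum)
  also have "\<dots> = (\<Sum>\<mu>\<in>M. ip n (f \<mu>) (f \<mu>))"
  proof (rule sum.cong[OF refl])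
    fix \<mu> assume mu: "\<mu> \<in> M"
    show "(\<Sum>\<nu>\<in>M. ip n (f \<mu>) (f \<nu>)) = ip n (f \<mu>) (f \<mu>)"
      by (subst sum.remove[OF M mu], subst sum.neutral) (use orth mu in auto)
  qed
  finally show "ip n X X = (\<Sum>\<mu>\<in>M. ip n (f \<mu>) (f \<mu>))" .
qed

lemma lc_eig:
  assumes sd: "spec_data n A P d" and Sn: "S \<subseteq> {..<n}" and mu: "\<forall>j\<in>S. d j = \<mu>"
  shows "\<forall>i<n. mv n A (lc S c P) i = \<mu> * lc S c P i"
proof (intro allI impI)
  fix i assume i: "i < n"
  have "mv n A (lc S c P) i = (\<Sum>j\<in>S. c j * mv n A (P j) i)"
    unfolding mv_def lc_def by (simp add: sum_distrib_left sum.swap[of _ S] algebra_simps)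
  also have "\<dots> = (\<Sum>j\<in>S. c j * (\<mu> * P j i))"
    using sd Sn mu i unfolding spec_data_def by (intro sum.cong refl) auto
  also have "\<dots> = \<mu> * lc S c P i" unfolding lc_def by (simp add: sum_distrib_left algebra_simps)
  finally show "mv n A (lc S c P) i = \<mu> * lc S c P i" .
qed

lemma ray_decomp:
  fixes c :: "nat \<Rightarrow> real" and r :: real
  assumes S: "symm n A" and sd: "spec_data n A P d" and Sn: "S \<subseteq> {..<n}"
  defines "x \<equiv> lc S c P"
  defines "q \<equiv> (\<lambda>\<mu>. ip n (lc {j\<in>S. d j = \<mu>} c P) (lc {j\<in>S. d j = \<mu>} c P))"
  shows "ip n x (mv n A x) - r * ip n x x = (\<Sum>\<mu>\<in>d ` S. (\<mu> - r) * q \<mu>)"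
    and "ip n x x = (\<Sum>\<mu>\<in>d ` S. q \<mu>)"
proof -
  have fin: "finite S" using Sn finite_subset by blast
  have xs: "x = (\<lambda>i. \<Sum>\<mu>\<in>d ` S. lc {j\<in>S. d j = \<mu>} c P i)"
    unfolding x_def lc_def by (intro ext, rule sum.group[OF fin, symmetric]) (auto simp: fin)
  have ev: "\<forall>\<mu>\<in>d ` S. \<forall>i<n. mv n A (lc {j\<in>S. d j = \<mu>} c P) i = \<mu> * lc {j\<in>S. d j = \<mu>} c P i"
    by (intro ballI lc_eig[OF sd]) (use Sn in auto)
  note R = ray_sum[OF S _ ev, folded xs]
  show "ip n x x = (\<Sum>\<mu>\<in>d ` S. q \<mu>)" unfolding q_def using R(2) fin by simp
  show "ip n x (mv n A x) - r * ip n x x = (\<Sum>\<mu>\<in>d ` S. (\<mu> - r) * q \<mu>)"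
    unfolding q_def using R fin by (simp add: sum_distrib_left sum_subtractf algebra_simps)
qed

lemma ray_bounds:
  fixes c :: "nat \<Rightarrow> real" and r :: real
  assumes S: "symm n A" and sd: "spec_data n A P d" and Sn: "S \<subseteq> {..<n}"
  defines "x \<equiv> lc S c P"
  shows "(\<forall>j\<in>S. d j \<le> r) \<Longrightarrow> ip n x (mv n A x) \<le> r * ip n x x"
    and "(\<forall>j\<in>S. d j \<ge> r) \<Longrightarrow> ip n x (mv n A x) \<ge> r * ip n x x"
    and "(\<forall>j\<in>S. d j < r) \<Longrightarrow> (\<exists>i<n. x i \<noteq> 0) \<Longrightarrow> ip n x (mv n A x) < r * ip n x x"
    and "(\<forall>j\<in>S. d j > r) \<Longrightarrow> (\<exists>i<n. x i \<noteq> 0) \<Longrightarrow> ip n x (mv n A x) > r * ip n x x"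
proof -
  have fin: "finite S" using Sn finite_subset by blast
  define q where "q = (\<lambda>\<mu>. ip n (lc {j\<in>S. d j = \<mu>} c P) (lc {j\<in>S. d j = \<mu>} c P))"
  have D1: "ip n x (mv n A x) - r * ip n x x = (\<Sum>\<mu>\<in>d ` S. (\<mu> - r) * q \<mu>)"
    unfolding q_def x_def by (rule ray_decomp(1)[OF S sd Sn])
  have D2: "ip n x x = (\<Sum>\<mu>\<in>d ` S. q \<mu>)"
    unfolding q_def x_def by (rule ray_decomp(2)[OF S sd Sn])
  note D = D1 D2
  have q0: "\<And>\<mu>. 0 \<le> q \<mu>" unfolding q_def by (rule ip_self_nonneg)
  have ex: "\<exists>\<mu>\<in>d ` S. 0 < q \<mu>" if "\<exists>i<n. x i \<noteq> 0"
  proof (rule ccontr)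
    assume "\<not> ?thesis"
    hence "\<forall>\<mu>\<in>d ` S. q \<mu> = 0" using q0 by (metis less_eq_real_def)
    hence "(\<Sum>\<mu>\<in>d ` S. q \<mu>) = 0" by (intro sum.neutral) blast
    hence "ip n x x = 0" using D(2) by simp
    thus False using ip_self_pos[OF that] by simp
  qed
  show "(\<forall>j\<in>S. d j \<le> r) \<Longrightarrow> ip n x (mv n A x) \<le> r * ip n x x"
  proof -
    assume a: "\<forall>j\<in>S. d j \<le> r"
    have "(\<Sum>\<mu>\<in>d ` S. (\<mu> - r) * q \<mu>) \<le> 0"
      by (intro sum_nonpos) (use a q0 in \<open>auto intro: mult_nonpos_nonneg\<close>)
    thus ?thesis using D(1) by simp
  qed
  show "(\<forall>j\<in>S. d j \<ge> r) \<Longrightarrow> ip n x (mv n A x) \<ge> r * ip n x x"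
  proof -
    assume a: "\<forall>j\<in>S. d j \<ge> r"
    have "(\<Sum>\<mu>\<in>d ` S. (\<mu> - r) * q \<mu>) \<ge> 0"
      by (intro sum_nonneg) (use a q0 in auto)
    thus ?thesis using D(1) by simp
  qed
  show "(\<forall>j\<in>S. d j < r) \<Longrightarrow> (\<exists>i<n. x i \<noteq> 0) \<Longrightarrow> ip n x (mv n A x) < r * ip n x x"
  proof -
    assume a: "\<forall>j\<in>S. d j < r" and nz: "\<exists>i<n. x i \<noteq> 0"
    obtain \<mu> where mu: "\<mu> \<in> d ` S" "0 < q \<mu>" using ex[OF nz] by auto
    have "0 < (\<Sum>\<mu>\<in>d ` S. (r - \<mu>) * q \<mu>)"
      by (rule sum_pos2[OF _ mu(1)]) (use a q0 mu fin in auto)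
    moreover have "(\<Sum>\<mu>\<in>d ` S. (r - \<mu>) * q \<mu>) = - (\<Sum>\<mu>\<in>d ` S. (\<mu> - r) * q \<mu>)"
      by (simp add: sum_negf[symmetric] algebra_simps)
    ultimately have "(\<Sum>\<mu>\<in>d ` S. (\<mu> - r) * q \<mu>) < 0" by linarith
    thus ?thesis using D(1) by simp
  qed
  show "(\<forall>j\<in>S. d j > r) \<Longrightarrow> (\<exists>i<n. x i \<noteq> 0) \<Longrightarrow> ip n x (mv n A x) > r * ip n x x"
  proof -
    assume a: "\<forall>j\<in>S. d j > r" and nz: "\<exists>i<n. x i \<noteq> 0"
    obtain \<mu> where mu: "\<mu> \<in> d ` S" "0 < q \<mu>" using ex[OF nz] by auto
    have "0 < (\<Sum>\<mu>\<in>d ` S. (\<mu> - r) * q \<mu>)"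
      by (rule sum_pos2[OF _ mu(1)]) (use a q0 mu fin in auto)
    thus ?thesis using D(1) by simp
  qed
qed

lemma ip_cong: "(\<And>i. i < n \<Longrightarrow> x i = x' i) \<Longrightarrow> (\<And>i. i < n \<Longrightarrow> y i = y' i) \<Longrightarrow> ip n x y = ip n x' y'"
  unfolding ip_def by (intro sum.cong) auto

lemma mv_cong: "(\<And>i. i < n \<Longrightarrow> x i = x' i) \<Longrightarrow> mv n A x i = mv n A x' i"
  unfolding mv_def by (intro sum.cong) auto

lemma qf_cong: "(\<And>i. i < n \<Longrightarrow> x i = x' i) \<Longrightarrow> ip n x (mv n A x) = ip n x' (mv n A x')"
  by (intro ip_cong mv_cong) auto

lemma mv_lc: "mv n A (lc K a y) i = (\<Sum>k\<in>K. a k * mv n A (y k) i)"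
  unfolding mv_def lc_def by (simp add: sum_distrib_left sum.swap[of _ K] algebra_simps)

lemma indep_subset:
  assumes "indep n {..<n} P" "J \<subseteq> {..<n}"
  shows "indep n J P"
  unfolding indep_def
proof (intro allI impI)
  fix c assume c: "\<forall>i<n. (\<Sum>k\<in>J. c k * P k i) = 0"
  define c' where "c' k = (if k \<in> J then c k else 0)" for k
  have "\<forall>i<n. (\<Sum>k<n. c' k * P k i) = 0"
  proof (intro allI impI)
    fix i assume i: "i < n"
    have "(\<Sum>k<n. c' k * P k i) = (\<Sum>k\<in>J. c' k * P k i)"
      by (rule sum.mono_neutral_right) (use assms(2) in \<open>auto simp: c'_def\<close>)
    also have "\<dots> = (\<Sum>k\<in>J. c k * P k i)" by (intro sum.cong) (auto simp: c'_def)
    finally show "(\<Sum>k<n. c' k * P k i) = 0" using c i by simp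
  qed
  hence z: "\<forall>k\<in>{..<n}. c' k = 0" using assms(1) unfolding indep_def by blast
  show "\<forall>k\<in>J. c k = 0"
  proof
    fix k assume k: "k \<in> J"
    hence "k \<in> {..<n}" using assms(2) by auto
    hence "c' k = 0" using z by blast
    thus "c k = 0" using k unfolding c'_def by simp
  qed
qed

definition emb :: "nat \<Rightarrow> (nat \<Rightarrow> nat) \<Rightarrow> (nat \<Rightarrow> real) \<Rightarrow> nat \<Rightarrow> real" where
  "emb m \<sigma> y i = (if i \<in> \<sigma> ` {..<m} then y (the_inv_into {..<m} \<sigma> i) else 0)"

locale embedding =
  fixes n m :: nat and \<sigma> :: "nat \<Rightarrow> nat"
  assumes inj: "inj_on \<sigma> {..<m}" and rng: "\<sigma> ` {..<m} \<subseteq> {..<n}"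
begin

lemma emb_at: "a < m \<Longrightarrow> emb m \<sigma> y (\<sigma> a) = y a"
  unfolding emb_def using inj by (auto simp: the_inv_into_f_f)

lemma sum_emb:
  assumes "\<And>i. i < n \<Longrightarrow> i \<notin> \<sigma> ` {..<m} \<Longrightarrow> f i = 0"
  shows "(\<Sum>i<n. f i) = (\<Sum>a<m. f (\<sigma> a))"
proof -
  have "(\<Sum>i<n. f i) = (\<Sum>i\<in>\<sigma> ` {..<m}. f i)"
    by (rule sum.mono_neutral_right) (use rng assms in auto)
  also have "\<dots> = (\<Sum>a<m. f (\<sigma> a))" by (simp add: sum.reindex[OF inj])
  finally show ?thesis .
qed

lemma emb_out: "i \<notin> \<sigma> ` {..<m} \<Longrightarrow> emb m \<sigma> y i = 0"
  unfolding emb_def by auto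

lemma ip_emb: "ip n (emb m \<sigma> y) (emb m \<sigma> z) = ip m y z"
  unfolding ip_def by (subst sum_emb) (auto simp: emb_out emb_at)

lemma qf_emb:
  assumes B: "\<And>a b. a < m \<Longrightarrow> b < m \<Longrightarrow> B $$ (a,b) = A $$ (\<sigma> a, \<sigma> b)"
  shows "ip n (emb m \<sigma> y) (mv n A (emb m \<sigma> y)) = ip m y (mv m B y)"
proof -
  have mv: "mv n A (emb m \<sigma> y) (\<sigma> a) = mv m B y a" if a: "a < m" for a
    unfolding mv_def by (subst sum_emb) (auto simp: emb_out emb_at B a)
  show ?thesis unfolding ip_def by (subst sum_emb) (auto simp: emb_out emb_at mv)
qed

lemma lc_emb: "lc I c (\<lambda>j. emb m \<sigma> (P j)) i = emb m \<sigma> (lc I c P) i"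
  unfolding lc_def emb_def by auto

lemma indep_emb:
  assumes "indep m {..<m} P" "I \<subseteq> {..<m}"
  shows "indep n I (\<lambda>j. emb m \<sigma> (P j))"
proof -
  have iI: "indep m I P" by (rule indep_subset[OF assms])
  show ?thesis unfolding indep_def
  proof (intro allI impI)
    fix c assume c: "\<forall>i<n. (\<Sum>k\<in>I. c k * emb m \<sigma> (P k) (i)) = 0"
    have "\<forall>a<m. (\<Sum>k\<in>I. c k * P k a) = 0"
    proof (intro allI impI)
      fix a assume a: "a < m"
      have "\<sigma> a < n" using rng a by auto
      hence "(\<Sum>k\<in>I. c k * emb m \<sigma> (P k) (\<sigma> a)) = 0" using c by simp
      thus "(\<Sum>k\<in>I. c k * P k a) = 0" using a by (simp add: emb_at)
    qed
    thus "\<forall>k\<in>I. c k = 0" using iI unfolding indep_def by blast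
  qed
qed

end

lemma card_split_pred: "card {j. j < n \<and> Q j} + card {j. j < n \<and> \<not> Q j} = (n::nat)"
proof -
  have "card ({j. j < n \<and> Q j} \<union> {j. j < n \<and> \<not> Q j}) = card {j. j < n \<and> Q j} + card {j. j < n \<and> \<not> Q j}"
    by (rule card_Un_disjoint) auto
  moreover have "{j. j < n \<and> Q j} \<union> {j. j < n \<and> \<not> Q j} = {..<n}" by auto
  ultimately show ?thesis by simp
qed

lemma interlace_core:
  fixes R :: "real \<Rightarrow> real \<Rightarrow> bool" and QA QB :: "real \<Rightarrow> bool"
  assumes SA: "symm n A" and sdA: "spec_data n A PA dA"
    and SB: "symm m B" and sdB: "spec_data m B PB dB"
    and em: "embedding n m \<sigma>" and B: "\<And>a b. a < m \<Longrightarrow> b < m \<Longrightarrow> B $$ (a,b) = A $$ (\<sigma> a, \<sigma> b)"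
    and HB: "\<And>c. (\<exists>i<m. lc {j. j < m \<and> QB (dB j)} c PB i \<noteq> 0) \<Longrightarrow>
               R (ip m (lc {j. j < m \<and> QB (dB j)} c PB) (mv m B (lc {j. j < m \<and> QB (dB j)} c PB)))
                 (ip m (lc {j. j < m \<and> QB (dB j)} c PB) (lc {j. j < m \<and> QB (dB j)} c PB))"
    and HA: "\<And>c. (\<exists>i<n. lc {j. j < n \<and> \<not> QA (dA j)} c PA i \<noteq> 0) \<Longrightarrow>
               \<not> R (ip n (lc {j. j < n \<and> \<not> QA (dA j)} c PA) (mv n A (lc {j. j < n \<and> \<not> QA (dA j)} c PA)))
                 (ip n (lc {j. j < n \<and> \<not> QA (dA j)} c PA) (lc {j. j < n \<and> \<not> QA (dA j)} c PA))"
  shows "card {j. j < m \<and> QB (dB j)} \<le> card {j. j < n \<and> QA (dA j)}"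
proof (rule ccontr)
  interpret embedding n m \<sigma> by (rule em)
  assume neg: "\<not> ?thesis"
  define I where "I = {j. j < m \<and> QB (dB j)}"
  define J where "J = {j. j < n \<and> \<not> QA (dA j)}"
  have cJ: "card {j. j < n \<and> QA (dA j)} + card J = n" unfolding J_def by (rule card_split_pred)
  have card: "n < card I + card J" using neg cJ unfolding I_def by linarith
  have iI: "indep n I (\<lambda>j. emb m \<sigma> (PB j))"
    by (rule indep_emb) (use sdB in \<open>auto simp: spec_data_def I_def\<close>)
  have iJ: "indep n J PA"
    by (rule indep_subset) (use sdA in \<open>auto simp: spec_data_def J_def\<close>)
  obtain a b where ab: "\<exists>i<n. (\<Sum>k\<in>I. a k * emb m \<sigma> (PB k) i) \<noteq> 0"
    "\<forall>i<n. (\<Sum>k\<in>I. a k * emb m \<sigma> (PB k) i) = (\<Sum>k\<in>J. b k * PA k i)"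
    using common_vector[OF _ _ card iI iJ] unfolding I_def J_def by auto
  define y where "y = lc I a PB"
  define x where "x = lc J b PA"
  have zx: "\<forall>i<n. emb m \<sigma> y i = x i" using ab(2) lc_emb[of I a PB]
    unfolding y_def x_def lc_def by simp
  have xnz: "\<exists>i<n. x i \<noteq> 0" using ab(1) zx lc_emb[of I a PB] unfolding y_def lc_def by metis
  have ynz: "\<exists>i<m. y i \<noteq> 0"
  proof (rule ccontr)
    assume "\<not> ?thesis"
    hence "\<forall>i. emb m \<sigma> y i = 0" unfolding emb_def using inj by (auto simp: the_inv_into_f_f)
    thus False using xnz zx by auto
  qed
  have "R (ip m y (mv m B y)) (ip m y y)" using HB[of a] ynz unfolding y_def I_def by auto
  moreover have "ip m y (mv m B y) = ip n x (mv n A x)"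
    using qf_emb[OF B, of y] qf_cong[of n "emb m \<sigma> y" x A] zx by simp
  moreover have "ip m y y = ip n x x"
    using ip_emb[of y y] ip_cong[of n "emb m \<sigma> y" x "emb m \<sigma> y" x] zx by simp
  moreover have "\<not> R (ip n x (mv n A x)) (ip n x x)" using HA[of b] xnz unfolding x_def J_def by auto
  ultimately show False by simp
qed

lemma interlace_cards:
  assumes SA: "symm n A" and sdA: "spec_data n A PA dA"
    and SB: "symm m B" and sdB: "spec_data m B PB dB"
    and em: "embedding n m \<sigma>" and B: "\<And>a b. a < m \<Longrightarrow> b < m \<Longrightarrow> B $$ (a,b) = A $$ (\<sigma> a, \<sigma> b)"
  shows "card {j. j < m \<and> dB j \<le> r} \<le> card {j. j < n \<and> dA j \<le> r}"
    and "card {j. j < m \<and> dB j < r} \<le> card {j. j < n \<and> dA j < r}"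
    and "card {j. j < m \<and> dB j \<ge> r} \<le> card {j. j < n \<and> dA j \<ge> r}"
    and "card {j. j < m \<and> dB j > r} \<le> card {j. j < n \<and> dA j > r}"
proof -
  have sA: "{j. j < n \<and> P j} \<subseteq> {..<n}" for P by auto
  have sB: "{j. j < m \<and> P j} \<subseteq> {..<m}" for P by auto
  show "card {j. j < m \<and> dB j \<le> r} \<le> card {j. j < n \<and> dA j \<le> r}"
  proof (rule interlace_core[OF SA sdA SB sdB em B, where R = "\<lambda>q nr. q \<le> r * nr" and QB = "\<lambda>x. x \<le> r" and QA = "\<lambda>x. x \<le> r"])
    fix c
    show "ip m (lc {j. j < m \<and> dB j \<le> r} c PB) (mv m B (lc {j. j < m \<and> dB j \<le> r} c PB))
      \<le> r * ip m (lc {j. j < m \<and> dB j \<le> r} c PB) (lc {j. j < m \<and> dB j \<le> r} c PB)"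
      by (rule ray_bounds(1)[OF SB sdB sB]) auto
  next
    fix c assume nz: "\<exists>i<n. lc {j. j < n \<and> \<not> dA j \<le> r} c PA i \<noteq> 0"
    have "ip n (lc {j. j < n \<and> \<not> dA j \<le> r} c PA) (mv n A (lc {j. j < n \<and> \<not> dA j \<le> r} c PA))
      > r * ip n (lc {j. j < n \<and> \<not> dA j \<le> r} c PA) (lc {j. j < n \<and> \<not> dA j \<le> r} c PA)"
      by (rule ray_bounds(4)[OF SA sdA sA]) (use nz in auto)
    thus "\<not> ip n (lc {j. j < n \<and> \<not> dA j \<le> r} c PA) (mv n A (lc {j. j < n \<and> \<not> dA j \<le> r} c PA))
      \<le> r * ip n (lc {j. j < n \<and> \<not> dA j \<le> r} c PA) (lc {j. j < n \<and> \<not> dA j \<le> r} c PA)" by simp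
  qed
  show "card {j. j < m \<and> dB j < r} \<le> card {j. j < n \<and> dA j < r}"
  proof (rule interlace_core[OF SA sdA SB sdB em B, where R = "\<lambda>q nr. q < r * nr" and QB = "\<lambda>x. x < r" and QA = "\<lambda>x. x < r"])
    fix c assume nz: "\<exists>i<m. lc {j. j < m \<and> dB j < r} c PB i \<noteq> 0"
    show "ip m (lc {j. j < m \<and> dB j < r} c PB) (mv m B (lc {j. j < m \<and> dB j < r} c PB))
      < r * ip m (lc {j. j < m \<and> dB j < r} c PB) (lc {j. j < m \<and> dB j < r} c PB)"
      by (rule ray_bounds(3)[OF SB sdB sB]) (use nz in auto)
  next
    fix c
    have "ip n (lc {j. j < n \<and> \<not> dA j < r} c PA) (mv n A (lc {j. j < n \<and> \<not> dA j < r} c PA))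
      \<ge> r * ip n (lc {j. j < n \<and> \<not> dA j < r} c PA) (lc {j. j < n \<and> \<not> dA j < r} c PA)"
      by (rule ray_bounds(2)[OF SA sdA sA]) auto
    thus "\<not> ip n (lc {j. j < n \<and> \<not> dA j < r} c PA) (mv n A (lc {j. j < n \<and> \<not> dA j < r} c PA))
      < r * ip n (lc {j. j < n \<and> \<not> dA j < r} c PA) (lc {j. j < n \<and> \<not> dA j < r} c PA)" by simp
  qed
  show "card {j. j < m \<and> dB j \<ge> r} \<le> card {j. j < n \<and> dA j \<ge> r}"
  proof (rule interlace_core[OF SA sdA SB sdB em B, where R = "\<lambda>q nr. q \<ge> r * nr" and QB = "\<lambda>x. x \<ge> r" and QA = "\<lambda>x. x \<ge> r"])
    fix c
    show "ip m (lc {j. j < m \<and> dB j \<ge> r} c PB) (mv m B (lc {j. j < m \<and> dB j \<ge> r} c PB))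
      \<ge> r * ip m (lc {j. j < m \<and> dB j \<ge> r} c PB) (lc {j. j < m \<and> dB j \<ge> r} c PB)"
      by (rule ray_bounds(2)[OF SB sdB sB]) auto
  next
    fix c assume nz: "\<exists>i<n. lc {j. j < n \<and> \<not> dA j \<ge> r} c PA i \<noteq> 0"
    have "ip n (lc {j. j < n \<and> \<not> dA j \<ge> r} c PA) (mv n A (lc {j. j < n \<and> \<not> dA j \<ge> r} c PA))
      < r * ip n (lc {j. j < n \<and> \<not> dA j \<ge> r} c PA) (lc {j. j < n \<and> \<not> dA j \<ge> r} c PA)"
      by (rule ray_bounds(3)[OF SA sdA sA]) (use nz in auto)
    thus "\<not> ip n (lc {j. j < n \<and> \<not> dA j \<ge> r} c PA) (mv n A (lc {j. j < n \<and> \<not> dA j \<ge> r} c PA))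
      \<ge> r * ip n (lc {j. j < n \<and> \<not> dA j \<ge> r} c PA) (lc {j. j < n \<and> \<not> dA j \<ge> r} c PA)" by simp
  qed
  show "card {j. j < m \<and> dB j > r} \<le> card {j. j < n \<and> dA j > r}"
  proof (rule interlace_core[OF SA sdA SB sdB em B, where R = "\<lambda>q nr. q > r * nr" and QB = "\<lambda>x. x > r" and QA = "\<lambda>x. x > r"])
    fix c assume nz: "\<exists>i<m. lc {j. j < m \<and> dB j > r} c PB i \<noteq> 0"
    show "ip m (lc {j. j < m \<and> dB j > r} c PB) (mv m B (lc {j. j < m \<and> dB j > r} c PB))
      > r * ip m (lc {j. j < m \<and> dB j > r} c PB) (lc {j. j < m \<and> dB j > r} c PB)"
      by (rule ray_bounds(4)[OF SB sdB sB]) (use nz in auto)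
  next
    fix c
    have "ip n (lc {j. j < n \<and> \<not> dA j > r} c PA) (mv n A (lc {j. j < n \<and> \<not> dA j > r} c PA))
      \<le> r * ip n (lc {j. j < n \<and> \<not> dA j > r} c PA) (lc {j. j < n \<and> \<not> dA j > r} c PA)"
      by (rule ray_bounds(1)[OF SA sdA sA]) auto
    thus "\<not> ip n (lc {j. j < n \<and> \<not> dA j > r} c PA) (mv n A (lc {j. j < n \<and> \<not> dA j > r} c PA))
      > r * ip n (lc {j. j < n \<and> \<not> dA j > r} c PA) (lc {j. j < n \<and> \<not> dA j > r} c PA)" by simp
  qed
qed

lemma mult_lower:
  fixes y :: "'k \<Rightarrow> nat \<Rightarrow> real"
  assumes SA: "symm n A" and sdA: "spec_data n A PA dA"
    and K: "finite K" and iK: "indep n K y"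
    and ev: "\<And>k i. k \<in> K \<Longrightarrow> i < n \<Longrightarrow> mv n A (y k) i = e * y k i"
  shows "card K \<le> card {j. j < n \<and> dA j = e}"
proof (rule ccontr)
  assume neg: "\<not> ?thesis"
  define J where "J = {j. j < n \<and> dA j \<noteq> e}"
  have cJ: "card {j. j < n \<and> dA j = e} + card J = n" unfolding J_def by (rule card_split_pred)
  have Jn: "J \<subseteq> {..<n}" unfolding J_def by auto
  have iJ: "indep n J PA" by (rule indep_subset) (use sdA Jn in \<open>auto simp: spec_data_def\<close>)
  have card: "n < card K + card J" using neg cJ by linarith
  obtain a b where ab: "\<exists>i<n. (\<Sum>k\<in>K. a k * y k i) \<noteq> 0"
    "\<forall>i<n. (\<Sum>k\<in>K. a k * y k i) = (\<Sum>k\<in>J. b k * PA k i)"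
    using common_vector[OF K _ card iK iJ] unfolding J_def by auto
  define z where "z = lc K a y"
  define x where "x = lc J b PA"
  have zx: "\<And>i. i < n \<Longrightarrow> z i = x i" using ab(2) unfolding z_def x_def lc_def by simp
  have mz: "mv n A z i = e * z i" if i: "i < n" for i
    unfolding z_def mv_lc lc_def using ev i by (simp add: sum_distrib_left algebra_simps)
  have mx: "mv n A x i = (\<Sum>k\<in>J. b k * (dA k * PA k i))" if i: "i < n" for i
  proof -
    have "mv n A x i = (\<Sum>k\<in>J. b k * mv n A (PA k) i)" unfolding x_def by (rule mv_lc)
    also have "\<dots> = (\<Sum>k\<in>J. b k * (dA k * PA k i))"
      using sdA i Jn unfolding spec_data_def by (intro sum.cong) auto
    finally show ?thesis .
  qed
  have "\<forall>i<n. (\<Sum>k\<in>J. (b k * (dA k - e)) * PA k i) = 0"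
  proof (intro allI impI)
    fix i assume i: "i < n"
    have "(\<Sum>k\<in>J. (b k * (dA k - e)) * PA k i) = mv n A x i - e * x i"
    proof -
      have xi: "x i = (\<Sum>k\<in>J. b k * PA k i)" unfolding x_def lc_def by simp
      show ?thesis unfolding mx[OF i] xi by (simp add: sum_distrib_left sum_subtractf algebra_simps)
    qed
    also have "\<dots> = mv n A z i - e * z i" using zx i mv_cong[of n z x A i] by simp
    also have "\<dots> = 0" using mz[OF i] by simp
    finally show "(\<Sum>k\<in>J. (b k * (dA k - e)) * PA k i) = 0" .
  qed
  hence "\<forall>k\<in>J. b k * (dA k - e) = 0" using iJ unfolding indep_def
    by (elim allE[where x="\<lambda>k. b k * (dA k - e)"]) simp
  hence "\<forall>k\<in>J. b k = 0" unfolding J_def by auto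
  hence "\<forall>i<n. x i = 0" unfolding x_def lc_def by simp
  thus False using ab(1) zx unfolding z_def lc_def by auto
qed

definition cnt :: "real mat \<Rightarrow> (real \<Rightarrow> bool) \<Rightarrow> nat" where
  "cnt A Q = length (filter Q (eigs A))"

lemma spec_data_ex:
  assumes S: "symm n A"
  shows "\<exists>P d. spec_data n A P d \<and> proots (char_poly A) = mset (map d [0..<n])"
proof (rule symm_spectral[OF S])
  fix P d
  assume E: "\<And>j i. j < n \<Longrightarrow> i < n \<Longrightarrow> (\<Sum>l<n. A $$ (i,l) * P j l) = d j * P j i"
    and I: "\<And>c. (\<forall>i<n. (\<Sum>j<n. c j * P j i) = 0) \<Longrightarrow> \<forall>j<n. c j = 0"
    and M: "proots (char_poly A) = mset (map d [0..<n])"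
  have "spec_data n A P d" unfolding spec_data_def indep_def mv_def
  proof (intro conjI allI impI)
    fix j i assume "j < n" "i < n"
    thus "(\<Sum>l<n. A $$ (i,l) * P j l) = d j * P j i" by (rule E)
  next
    fix c assume "\<forall>i<n. (\<Sum>k\<in>{..<n}. c k * P k i) = 0"
    hence "\<forall>j<n. c j = 0" by (rule I)
    thus "\<forall>k\<in>{..<n}. c k = 0" by simp
  qed
  thus "\<exists>P d. spec_data n A P d \<and> proots (char_poly A) = mset (map d [0..<n])" using M by blast
qed

lemma spec_cnt:
  assumes S: "symm n A"
  shows "\<exists>P d. spec_data n A P d \<and> (\<forall>Q. cnt A Q = card {j. j < n \<and> Q (d j)})
    \<and> length (eigs A) = n \<and> sorted (eigs A)"
proof -
  obtain P d where sd: "spec_data n A P d" and M: "proots (char_poly A) = mset (map d [0..<n])"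
    using spec_data_ex[OF S] by blast
  have me: "mset (eigs A) = mset (map d [0..<n])" unfolding eigs_def M by simp
  have c: "cnt A Q = card {j. j < n \<and> Q (d j)}" for Q
  proof -
    have "cnt A Q = size (mset (filter Q (eigs A)))" unfolding cnt_def by (simp only: size_mset)
    also have "\<dots> = size (mset (filter Q (map d [0..<n])))" unfolding mset_filter me ..
    also have "\<dots> = length (filter Q (map d [0..<n]))" by (simp only: size_mset)
    also have "\<dots> = card {j. j < n \<and> Q (d j)}" unfolding length_filter_conv_card
      by (intro arg_cong[where f=card] Collect_cong) auto
    finally show ?thesis .
  qed
  have "length (eigs A) = length (map d [0..<n])" by (rule mset_eq_length[OF me])
  hence "length (eigs A) = n" by simp
  moreover have "sorted (eigs A)" unfolding eigs_def by simp
  ultimately show ?thesis using sd c by blast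
qed



section \<open>Counting in sorted lists\<close>

lemma length_filter_card_idx: "length (filter Q L) = card {k. k < length L \<and> Q (L ! k)}"
  by (rule length_filter_conv_card)

lemma sorted_cnt_lt:
  fixes L :: "real list"
  assumes s: "sorted L" and j: "j \<le> length (filter (\<lambda>x. x < c) L)" and idx: "idx < j"
  shows "L ! idx < c"
proof (rule ccontr)
  assume "\<not> ?thesis"
  hence ge: "L ! idx \<ge> c" by simp
  have "{k. k < length L \<and> L ! k < c} \<subseteq> {..<idx}"
  proof
    fix k assume k: "k \<in> {k. k < length L \<and> L ! k < c}"
    show "k \<in> {..<idx}"
    proof (rule ccontr)
      assume "k \<notin> {..<idx}"
      hence "idx \<le> k" by simp
      hence "L ! idx \<le> L ! k" using s k by (simp add: sorted_nth_mono)
      thus False using k ge by simp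
    qed
  qed
  hence "card {k. k < length L \<and> L ! k < c} \<le> idx"
    by (metis card_lessThan card_mono finite_lessThan)
  thus False using j idx unfolding length_filter_card_idx by simp
qed

lemma sorted_cnt_le:
  fixes L :: "real list"
  assumes s: "sorted L" and j: "j \<le> length (filter (\<lambda>x. x \<le> c) L)" and idx: "idx < j"
  shows "L ! idx \<le> c"
proof (rule ccontr)
  assume "\<not> ?thesis"
  hence ge: "L ! idx > c" by simp
  have "{k. k < length L \<and> L ! k \<le> c} \<subseteq> {..<idx}"
  proof
    fix k assume k: "k \<in> {k. k < length L \<and> L ! k \<le> c}"
    show "k \<in> {..<idx}"
    proof (rule ccontr)
      assume "k \<notin> {..<idx}"
      hence "idx \<le> k" by simp
      hence "L ! idx \<le> L ! k" using s k by (simp add: sorted_nth_mono)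
      thus False using k ge by simp
    qed
  qed
  hence "card {k. k < length L \<and> L ! k \<le> c} \<le> idx"
    by (metis card_lessThan card_mono finite_lessThan)
  thus False using j idx unfolding length_filter_card_idx by simp
qed

lemma sorted_cnt_gt:
  fixes L :: "real list"
  assumes s: "sorted L" and j: "j \<le> length (filter (\<lambda>x. x > c) L)"
    and idx: "length L - j \<le> idx" "idx < length L"
  shows "L ! idx > c"
proof (rule ccontr)
  assume "\<not> ?thesis"
  hence le: "L ! idx \<le> c" by simp
  have "{k. k < length L \<and> L ! k > c} \<subseteq> {Suc idx..<length L}"
  proof
    fix k assume k: "k \<in> {k. k < length L \<and> L ! k > c}"
    show "k \<in> {Suc idx..<length L}"
    proof (rule ccontr)
      assume "k \<notin> {Suc idx..<length L}"
      hence "k \<le> idx" using k by auto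
      hence "L ! k \<le> L ! idx" using s idx by (simp add: sorted_nth_mono)
      thus False using k le by simp
    qed
  qed
  hence "card {k. k < length L \<and> L ! k > c} \<le> length L - Suc idx"
    by (metis card_atLeastLessThan card_mono finite_atLeastLessThan)
  thus False using j idx unfolding length_filter_card_idx by simp
qed

lemma sorted_cnt_ge:
  fixes L :: "real list"
  assumes s: "sorted L" and j: "j \<le> length (filter (\<lambda>x. x \<ge> c) L)"
    and idx: "length L - j \<le> idx" "idx < length L"
  shows "L ! idx \<ge> c"
proof (rule ccontr)
  assume "\<not> ?thesis"
  hence le: "L ! idx < c" by simp
  have "{k. k < length L \<and> L ! k \<ge> c} \<subseteq> {Suc idx..<length L}"
  proof
    fix k assume k: "k \<in> {k. k < length L \<and> L ! k \<ge> c}"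
    show "k \<in> {Suc idx..<length L}"
    proof (rule ccontr)
      assume "k \<notin> {Suc idx..<length L}"
      hence "k \<le> idx" using k by auto
      hence "L ! k \<le> L ! idx" using s idx by (simp add: sorted_nth_mono)
      thus False using k le by simp
    qed
  qed
  hence "card {k. k < length L \<and> L ! k \<ge> c} \<le> length L - Suc idx"
    by (metis card_atLeastLessThan card_mono finite_atLeastLessThan)
  thus False using j idx unfolding length_filter_card_idx by simp
qed

lemma sorted_self_le:
  fixes L :: "real list"
  assumes s: "sorted L" and idx: "idx < length L"
  shows "Suc idx \<le> length (filter (\<lambda>x. x \<le> L ! idx) L)"
proof -
  have "{..<Suc idx} \<subseteq> {k. k < length L \<and> L ! k \<le> L ! idx}"
    using s idx by (auto simp: sorted_nth_mono)
  hence "card {..<Suc idx} \<le> card {k. k < length L \<and> L ! k \<le> L ! idx}"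
    by (intro card_mono) auto
  thus ?thesis unfolding length_filter_card_idx by simp
qed

lemma sorted_self_ge:
  fixes L :: "real list"
  assumes s: "sorted L" and idx: "idx < length L"
  shows "length L - idx \<le> length (filter (\<lambda>x. x \<ge> L ! idx) L)"
proof -
  have "{idx..<length L} \<subseteq> {k. k < length L \<and> L ! k \<ge> L ! idx}"
    using s idx by (auto simp: sorted_nth_mono)
  hence "card {idx..<length L} \<le> card {k. k < length L \<and> L ! k \<ge> L ! idx}"
    by (intro card_mono) auto
  thus ?thesis unfolding length_filter_card_idx by simp
qed

lemma length_filter_disj:
  assumes "\<And>x. \<not> (P x \<and> Q x)"
  shows "length (filter (\<lambda>x. P x \<or> Q x) xs) = length (filter P xs) + length (filter Q xs)"
  using assms by (induct xs) auto

lemma length_filter_mono: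
  assumes "\<And>x. P x \<Longrightarrow> Q x"
  shows "length (filter P xs) \<le> length (filter Q xs)"
  using assms by (induct xs) auto

lemma length_filter_cong:
  assumes "\<And>x. P x \<longleftrightarrow> Q x"
  shows "length (filter P xs) = length (filter Q xs)"
  using assms by (metis filter_cong)

lemma char_poly_nz: "A \<in> carrier_mat n n \<Longrightarrow> char_poly (A :: real mat) \<noteq> 0"
  using degree_monic_char_poly[of A n] by auto

lemma eigs_root:
  assumes A: "A \<in> carrier_mat n n" and mu: "\<mu> \<in> set (eigs A)"
  shows "poly (char_poly A) \<mu> = 0"
proof -
  have "\<mu> \<in># proots (char_poly A)" using mu unfolding eigs_def by simp
  hence "0 < count (proots (char_poly A)) \<mu>" by simp
  hence "0 < Polynomial.order \<mu> (char_poly A)" using char_poly_nz[OF A] by simp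
  thus ?thesis using char_poly_nz[OF A] order_root by (metis less_irrefl)
qed

lemma eig_in_eigs_vec:
  assumes A: "A \<in> carrier_mat n n" and mu: "\<mu> \<in> set (eigs A)"
  shows "\<exists>x. (\<exists>i<n. x i \<noteq> 0) \<and> (\<forall>i<n. mv n A x i = \<mu> * x i)"
proof -
  have "eigenvalue A \<mu>" using eigenvalue_root_char_poly[OF A] eigs_root[OF A mu] by simp
  then obtain v where ev: "eigenvector A v \<mu>" unfolding eigenvalue_def by auto
  have v: "v \<in> carrier_vec n" "v \<noteq> 0\<^sub>v n" and Av: "A *\<^sub>v v = \<mu> \<cdot>\<^sub>v v"
    using ev A unfolding eigenvector_def by auto
  have "\<exists>i<n. v $ i \<noteq> 0"
  proof (rule ccontr)
    assume "\<not> ?thesis"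
    hence "v = 0\<^sub>v n" using v(1) by (intro eq_vecI) auto
    thus False using v(2) by simp
  qed
  moreover have "\<forall>i<n. mv n A (\<lambda>i. v $ i) i = \<mu> * v $ i"
  proof (intro allI impI)
    fix i assume i: "i < n"
    have "(A *\<^sub>v v) $ i = (\<mu> \<cdot>\<^sub>v v) $ i" using Av by simp
    thus "mv n A (\<lambda>i. v $ i) i = \<mu> * v $ i"
      using i A v unfolding mv_def
      by (auto simp: scalar_prod_def lessThan_atLeast0 intro!: sum.cong)
  qed
  ultimately show ?thesis by blast
qed

lemma not_eig_by_kernel:
  assumes A: "A \<in> carrier_mat n n"
    and K: "\<And>x. (\<forall>i<n. mv n A x i = \<mu> * x i) \<Longrightarrow> \<forall>i<n. x i = 0"
  shows "\<mu> \<notin> set (eigs A)"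
proof
  assume "\<mu> \<in> set (eigs A)"
  then obtain x where x: "\<exists>i<n. x i \<noteq> 0" "\<forall>i<n. mv n A x i = \<mu> * x i"
    using eig_in_eigs_vec[OF A] by blast
  from K[OF x(2)] x(1) show False by auto
qed

section \<open>Threshold graphs\<close>

lemma threshold_carrier: "threshold_adj b \<in> carrier_mat (length b) (length b)"
  unfolding threshold_adj_def by simp

lemma threshold_entry:
  "i < length b \<Longrightarrow> j < length b \<Longrightarrow>
   threshold_adj b $$ (i,j) = (if i \<noteq> j \<and> b ! max i j = 1 then 1 else 0)"
  unfolding threshold_adj_def by simp

lemma threshold_symm: "symm (length b) (threshold_adj b)"
  unfolding symm_def using threshold_carrier threshold_entry by (auto simp: max.commute)

definition tw :: "nat \<Rightarrow> nat \<Rightarrow> nat \<Rightarrow> real" where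
  "tw a c i = (if i = a then 1 else if i = c then -1 else 0)"

lemma mv_tw:
  assumes "a < N" "c < N" "a \<noteq> c"
  shows "mv N M (tw a c) i = M $$ (i,a) - M $$ (i,c)"
proof -
  have "\<And>l. M $$ (i,l) * tw a c l = (if l = a then M $$ (i,a) else 0) + (if l = c then - M $$ (i,c) else 0)"
    using assms(3) by (auto simp: tw_def)
  hence "mv N M (tw a c) i = (\<Sum>l<N. (if l = a then M $$ (i,a) else 0) + (if l = c then - M $$ (i,c) else 0))"
    unfolding mv_def by simp
  also have "\<dots> = M $$ (i,a) - M $$ (i,c)" using assms by (simp add: sum.distrib)
  finally show ?thesis .
qed

lemma twin_eig:
  fixes b :: "nat list"
  assumes ac: "a < c" "c < length b"
    and mid: "\<And>w. a < w \<Longrightarrow> w \<le> c \<Longrightarrow> b ! w = b ! c"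
    and first: "0 < a \<Longrightarrow> b ! a = b ! c"
  shows "\<forall>i<length b. mv (length b) (threshold_adj b) (tw a c) i
           = (if b ! c = 1 then -1 else 0) * tw a c i"
proof (intro allI impI)
  fix i assume i: "i < length b"
  have a: "a < length b" using ac by simp
  have "mv (length b) (threshold_adj b) (tw a c) i = threshold_adj b $$ (i,a) - threshold_adj b $$ (i,c)"
    by (rule mv_tw) (use ac in auto)
  also have "\<dots> = (if b ! c = 1 then -1 else 0) * tw a c i"
  proof (cases "i = a")
    case True thus ?thesis using ac a i by (simp add: threshold_entry tw_def max_def)
  next
    case na: False
    show ?thesis
    proof (cases "i = c")
      case True thus ?thesis using ac a i by (simp add: threshold_entry tw_def max_def)
    next
      case nc: False
      have tw0: "tw a c i = 0" using na nc by (simp add: tw_def)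
      show ?thesis
      proof (cases "i < a")
        case True
        hence "b ! a = b ! c" using first by simp
        moreover have "threshold_adj b $$ (i,a) = (if b ! a = 1 then 1 else 0)"
          using True a i by (simp add: threshold_entry max_def)
        moreover have "threshold_adj b $$ (i,c) = (if b ! c = 1 then 1 else 0)"
          using True ac i by (simp add: threshold_entry max_def)
        ultimately show ?thesis using tw0 by simp
      next
        case False
        hence ai: "a < i" using na by simp
        show ?thesis
        proof (cases "i < c")
          case True
          hence "b ! i = b ! c" using ai by (intro mid) auto
          moreover have "threshold_adj b $$ (i,a) = (if b ! i = 1 then 1 else 0)"
            using ai a i by (simp add: threshold_entry max_def)
          moreover have "threshold_adj b $$ (i,c) = (if b ! c = 1 then 1 else 0)"
            using True ac i by (simp add: threshold_entry max_def)
          ultimately show ?thesis using tw0 by simp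
        next
          case False
          hence ci: "c < i" using nc by simp
          have "threshold_adj b $$ (i,a) = (if b ! i = 1 then 1 else 0)"
            using ai a i by (simp add: threshold_entry max_def)
          moreover have "threshold_adj b $$ (i,c) = (if b ! i = 1 then 1 else 0)"
            using ci ac i by (simp add: threshold_entry max_def)
          ultimately show ?thesis using tw0 by simp
        qed
      qed
    qed
  qed
  finally show "mv (length b) (threshold_adj b) (tw a c) i = (if b ! c = 1 then -1 else 0) * tw a c i" .
qed

lemma tw_indep:
  fixes a c :: "'k \<Rightarrow> nat"
  assumes K: "finite K" and inj: "inj_on c K" and cN: "\<forall>\<kappa>\<in>K. c \<kappa> < N"
    and ac: "\<forall>\<kappa>\<in>K. a \<kappa> \<notin> c ` K"
  shows "indep N K (\<lambda>\<kappa>. tw (a \<kappa>) (c \<kappa>))"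
  unfolding indep_def
proof (intro allI impI ballI)
  fix \<alpha> \<kappa>0 assume z: "\<forall>i<N. (\<Sum>\<kappa>\<in>K. \<alpha> \<kappa> * tw (a \<kappa>) (c \<kappa>) i) = 0" and k0: "\<kappa>0 \<in> K"
  have "(\<Sum>\<kappa>\<in>K. \<alpha> \<kappa> * tw (a \<kappa>) (c \<kappa>) (c \<kappa>0)) = 0" using z cN k0 by simp
  moreover have "(\<Sum>\<kappa>\<in>K. \<alpha> \<kappa> * tw (a \<kappa>) (c \<kappa>) (c \<kappa>0)) = (\<Sum>\<kappa>\<in>K. if \<kappa> = \<kappa>0 then - \<alpha> \<kappa>0 else 0)"
  proof (rule sum.cong[OF refl])
    fix \<kappa> assume k: "\<kappa> \<in> K"
    have "c \<kappa>0 \<noteq> a \<kappa>" using ac k k0 by (metis image_eqI)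
    moreover have "c \<kappa>0 = c \<kappa> \<longleftrightarrow> \<kappa> = \<kappa>0" using inj k k0 by (auto dest: inj_onD)
    ultimately show "\<alpha> \<kappa> * tw (a \<kappa>) (c \<kappa>) (c \<kappa>0) = (if \<kappa> = \<kappa>0 then - \<alpha> \<kappa>0 else 0)"
      by (auto simp: tw_def)
  qed
  ultimately show "\<alpha> \<kappa>0 = 0" using K k0 by simp
qed

section \<open>Block strings\<close>

definition off :: "(nat \<Rightarrow> nat) \<Rightarrow> (nat \<Rightarrow> nat) \<Rightarrow> nat \<Rightarrow> nat" where
  "off s t i = (\<Sum>l<i. s l + t l)"

lemma off_Suc: "off s t (Suc i) = off s t i + s i + t i"
  unfolding off_def by simp

lemma off_mono: "i \<le> j \<Longrightarrow> off s t i \<le> off s t j"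
  unfolding off_def by (rule sum_mono2) auto

lemma block_string_Suc:
  "block_string (Suc k) s t = block_string k s t @ (replicate (s k) 0 @ replicate (t k) 1)"
  unfolding block_string_def by simp

lemma block_string_len: "length (block_string k s t) = off s t k"
proof (induct k)
  case 0 show ?case by (simp add: block_string_def off_def)
next
  case (Suc k) thus ?case by (simp add: block_string_Suc off_Suc)
qed

lemma off_lt: "i < j \<Longrightarrow> r < s i + t i \<Longrightarrow> off s t i + r < off s t j"
proof -
  assume ij: "i < j" and r: "r < s i + t i"
  have "off s t i + r < off s t (Suc i)" using r by (simp add: off_Suc)
  also have "\<dots> \<le> off s t j" using ij by (intro off_mono) simp
  finally show ?thesis .
qed

lemma block_string_nth:
  assumes "i < k" "r < s i + t i"
  shows "block_string k s t ! (off s t i + r) = (if r < s i then 0 else 1)"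
  using assms
proof (induct k)
  case (Suc k)
  show ?case
  proof (cases "i < k")
    case True
    have "off s t i + r < length (block_string k s t)"
      unfolding block_string_len using off_lt[of i k r s t, OF True Suc(3)] .
    thus ?thesis unfolding block_string_Suc using Suc True by (simp add: nth_append)
  next
    case False
    hence i: "i = k" using Suc by simp
    have "(replicate (s k) (0::nat) @ replicate (t k) 1) ! r = (if r < s k then 0 else 1)"
      using Suc(3) i by (simp add: nth_append)
    thus ?thesis unfolding block_string_Suc i by (simp add: nth_append block_string_len)
  qed
qed simp

lemma pos_inj:
  assumes "r < s i + t i" "r' < s i' + t i'" "off s t i + r = off s t i' + r'"
  shows "i = i' \<and> r = r'"
proof -
  have "\<not> i < i'"
  proof
    assume "i < i'"
    hence "off s t i + r < off s t i'" by (rule off_lt) (use assms in simp)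
    thus False using assms(3) by simp
  qed
  moreover have "\<not> i' < i"
  proof
    assume "i' < i"
    hence "off s t i' + r' < off s t i" by (rule off_lt) (use assms in simp)
    thus False using assms(3) by simp
  qed
  ultimately have "i = i'" by simp
  thus ?thesis using assms by simp
qed

section \<open>Anti-regular graphs\<close>

lemma concat01_len: "length (concat (replicate q [0,1::nat])) = 2 * q"
  by (induct q) auto

lemmas concat01_len' = concat01_len[unfolded One_nat_def]

lemma concat01_nth: "i < 2 * q \<Longrightarrow> concat (replicate q [0,1::nat]) ! i = i mod 2"
proof (induct q arbitrary: i)
  case (Suc q)
  show ?case
  proof (cases "i < 2")
    case True thus ?thesis by (cases i) (auto simp: nth_Cons')
  next
    case False
    hence "concat (replicate (Suc q) [0,1::nat]) ! i = concat (replicate q [0,1::nat]) ! (i - 2)"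
      by (simp add: nth_append numeral_2_eq_2)
    also have "\<dots> = (i - 2) mod 2" using Suc False by simp
    also have "\<dots> = i mod 2" using False by presburger
    finally show ?thesis .
  qed
qed simp

lemma antireg_len: "length (antireg_string m) = m"
  unfolding antireg_string_def
  using even_two_times_div_two[of m] odd_two_times_div_two_succ[of m] by (auto simp: concat01_len concat01_len')

lemma antireg_nth:
  assumes "0 < i" "i < m"
  shows "antireg_string m ! i = (if odd (m + i) then 1 else 0)"
proof (cases "even m")
  case True
  have i: "i < 2 * (m div 2)" using True assms even_two_times_div_two[of m] by simp
  have "antireg_string m = concat (replicate (m div 2) [0,1])" using True unfolding antireg_string_def by simp
  hence "antireg_string m ! i = i mod 2" using concat01_nth[OF i] by simp
  also have "\<dots> = (if odd (m + i) then 1 else 0)" using True by (simp add: mod2_eq_if)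
  finally show ?thesis .
next
  case False
  have i: "i - 1 < 2 * (m div 2)" using False assms odd_two_times_div_two_succ[of m] by simp
  have "antireg_string m = 0 # concat (replicate (m div 2) [0,1])" using False unfolding antireg_string_def by simp
  hence "antireg_string m ! i = (i - 1) mod 2" using concat01_nth[OF i] assms by (simp add: nth_Cons')
  also have "\<dots> = (if odd (m + i) then 1 else 0)" using False assms
    by (cases i) (simp_all add: mod2_eq_if)
  finally show ?thesis .
qed

lemma antireg_carrier: "antireg_adj m \<in> carrier_mat m m"
  unfolding antireg_adj_def using threshold_carrier[of "antireg_string m"] by (simp add: antireg_len)

lemma antireg_entry:
  assumes "i < m" "j < m"
  shows "antireg_adj m $$ (i,j) = (if i \<noteq> j \<and> odd (m + max i j) then 1 else 0)"
proof -
  have e: "antireg_adj m $$ (i,j) = (if i \<noteq> j \<and> antireg_string m ! max i j = 1 then 1 else 0)"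
    unfolding antireg_adj_def using assms by (simp add: threshold_entry antireg_len)
  show ?thesis
  proof (cases "i = j")
    case True thus ?thesis using e by simp
  next
    case False
    have "antireg_string m ! max i j = (if odd (m + max i j) then 1 else 0)"
      by (rule antireg_nth) (use assms False in \<open>auto simp: max_def\<close>)
    thus ?thesis using e False by (cases "odd (m + max i j)") auto
  qed
qed

lemma antireg_symm: "symm m (antireg_adj m)"
  unfolding antireg_adj_def using threshold_symm[of "antireg_string m"] by (simp add: antireg_len)



lemma antireg_entry_shift:
  assumes "i < m" "l < m"
  shows "antireg_adj (m+2) $$ (i,l) = antireg_adj m $$ (i,l)"
proof -
  have "antireg_adj (m+2) $$ (i,l) = (if i \<noteq> l \<and> odd (m+2+max i l) then 1 else 0)"
    by (rule antireg_entry) (use assms in auto)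
  moreover have "antireg_adj m $$ (i,l) = (if i \<noteq> l \<and> odd (m+max i l) then 1 else 0)"
    by (rule antireg_entry) (use assms in auto)
  moreover have "odd (m+2+max i l) = odd (m+max i l)" by simp
  ultimately show ?thesis by simp
qed

lemmas antireg_entry_shift' = antireg_entry_shift[simplified]

lemma anti_mv_old:
  assumes i: "i < m"
  shows "mv (m+2) (antireg_adj (m+2)) x i = mv m (antireg_adj m) x i + x (m+1)"
proof -
  have "mv (m+2) (antireg_adj (m+2)) x i
      = (\<Sum>l<m. antireg_adj (m+2) $$ (i,l) * x l) + antireg_adj (m+2) $$ (i,m) * x m
        + antireg_adj (m+2) $$ (i,m+1) * x (m+1)"
    unfolding mv_def by (simp add: numeral_2_eq_2)
  also have "(\<Sum>l<m. antireg_adj (m+2) $$ (i,l) * x l) = mv m (antireg_adj m) x i"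
    unfolding mv_def using i by (intro sum.cong) (auto simp: antireg_entry_shift')
  also have "antireg_adj (m+2) $$ (i,m) = 0" using i by (simp add: antireg_entry max_def)
  also have "antireg_adj (m+2) $$ (i,m+1) = 1" using i by (simp add: antireg_entry max_def)
  finally show ?thesis by simp
qed

lemma anti_mv_u: "mv (m+2) (antireg_adj (m+2)) x m = x (m+1)"
proof -
  have "mv (m+2) (antireg_adj (m+2)) x m
      = (\<Sum>l<m. antireg_adj (m+2) $$ (m,l) * x l) + antireg_adj (m+2) $$ (m,m) * x m
        + antireg_adj (m+2) $$ (m,m+1) * x (m+1)"
    unfolding mv_def by (simp add: numeral_2_eq_2)
  also have "(\<Sum>l<m. antireg_adj (m+2) $$ (m,l) * x l) = 0"
    by (intro sum.neutral) (auto simp: antireg_entry max_def)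
  also have "antireg_adj (m+2) $$ (m,m) = 0" by (simp add: antireg_entry)
  also have "antireg_adj (m+2) $$ (m,m+1) = 1" by (simp add: antireg_entry max_def)
  finally show ?thesis by simp
qed

lemma anti_mv_w: "mv (m+2) (antireg_adj (m+2)) x (m+1) = (\<Sum>l<m+1. x l)"
proof -
  have "mv (m+2) (antireg_adj (m+2)) x (m+1)
      = (\<Sum>l<m+1. antireg_adj (m+2) $$ (m+1,l) * x l) + antireg_adj (m+2) $$ (m+1,m+1) * x (m+1)"
    unfolding mv_def by (simp add: numeral_2_eq_2)
  also have "(\<Sum>l<m+1. antireg_adj (m+2) $$ (m+1,l) * x l) = (\<Sum>l<m+1. x l)"
    by (intro sum.cong) (auto simp: antireg_entry max_def)
  also have "antireg_adj (m+2) $$ (m+1,m+1) = 0" by (simp add: antireg_entry)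
  finally show ?thesis by simp
qed

lemma anti_NS1_step:
  assumes IH: "\<forall>x. (\<forall>i<m. mv m (antireg_adj m) x i = 0) \<longrightarrow> (\<forall>i<m. x i = 0)"
  shows "\<forall>x. (\<forall>i<m+2. mv (m+2) (antireg_adj (m+2)) x i = 0) \<longrightarrow> (\<forall>i<m+2. x i = 0)"
proof (rule allI, rule impI)
  fix x assume h: "\<forall>i<m+2. mv (m+2) (antireg_adj (m+2)) x i = 0"
  have w: "x (m+1) = 0" using h[rule_format, of m] anti_mv_u[of m x] by simp
  have "\<forall>i<m. mv m (antireg_adj m) x i = 0"
    using h anti_mv_old[of _ m x] w by auto
  hence old: "\<forall>i<m. x i = 0" using IH by blast
  have "(\<Sum>l<m+1. x l) = 0" using h[rule_format, of "m+1"] anti_mv_w[of m x] by simp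
  hence u: "x m = 0" using old by simp
  show "\<forall>i<m+2. x i = 0"
  proof (intro allI impI)
    fix i assume "i < m + 2"
    hence "i < m \<or> i = m \<or> i = m + 1" by auto
    thus "x i = 0" using old u w by auto
  qed
qed

lemma anti_NS1:
  "\<forall>x. (\<forall>i<2*k. mv (2*k) (antireg_adj (2*k)) x i = 0) \<longrightarrow> (\<forall>i<2*k. x i = 0)"
proof (induct k)
  case 0 show ?case by simp
next
  case (Suc k)
  have e: "2 * Suc k = 2*k + 2" by simp
  show ?case unfolding e by (rule anti_NS1_step[OF Suc])
qed

lemma anti_strong:
  "\<forall>x \<alpha>. (\<forall>i<2*k+1. mv (2*k+1) (antireg_adj (2*k+1)) x i + x i = \<alpha>) \<and> (\<Sum>i<2*k+1. x i) = 0
     \<longrightarrow> (\<forall>i<2*k+1. x i = 0) \<and> \<alpha> = 0"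
proof (induct k)
  case 0
  show ?case
  proof (intro allI impI)
    fix x \<alpha> assume h: "(\<forall>i<2*0+1. mv (2*0+1) (antireg_adj (2*0+1)) x i + x i = \<alpha>) \<and> (\<Sum>i<2*0+1. x i) = 0"
    have "mv 1 (antireg_adj 1) x 0 = 0" unfolding mv_def by (simp add: antireg_entry)
    hence "x 0 = \<alpha>" "x 0 = 0" using h by auto
    thus "(\<forall>i<2*0+1. x i = 0) \<and> \<alpha> = 0" by auto
  qed
next
  case (Suc k)
  let ?m = "2*k+1"
  have m2: "2 * Suc k + 1 = ?m + 2" by simp
  show ?case unfolding m2
  proof (intro allI impI)
    fix x \<alpha> assume h: "(\<forall>i<?m+2. mv (?m+2) (antireg_adj (?m+2)) x i + x i = \<alpha>) \<and> (\<Sum>i<?m+2. x i) = 0"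
    have sum2: "(\<Sum>i<?m+2. x i) = (\<Sum>i<?m. x i) + x ?m + x (?m+1)" by (simp add: numeral_2_eq_2)
    have "(\<Sum>l<?m+1. x l) + x (?m+1) = \<alpha>" using h[THEN conjunct1, rule_format, of "?m+1"] anti_mv_w[of ?m x] by simp
    hence a0: "\<alpha> = 0" using h sum2 by simp
    have u: "x (?m+1) + x ?m = 0" using h[THEN conjunct1, rule_format, of "?m"] anti_mv_u[of ?m x] a0 by simp
    have old: "\<forall>i<?m. mv ?m (antireg_adj ?m) x i + x i = - x (?m+1)"
    proof (intro allI impI)
      fix i assume i: "i < ?m"
      have "mv (?m+2) (antireg_adj (?m+2)) x i + x i = \<alpha>" using h i by simp
      moreover have "mv (?m+2) (antireg_adj (?m+2)) x i = mv ?m (antireg_adj ?m) x i + x (?m+1)"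
        by (rule anti_mv_old[OF i])
      ultimately show "mv ?m (antireg_adj ?m) x i + x i = - x (?m+1)" using a0 by linarith
    qed
    have s0: "(\<Sum>i<?m. x i) = 0" using h sum2 u by simp
    have "(\<forall>i<?m. x i = 0) \<and> - x (?m+1) = 0" using Suc old s0 by blast
    hence "\<forall>i<?m. x i = 0" "x (?m+1) = 0" by auto
    moreover have "x ?m = 0" using u calculation by simp
    ultimately have "\<forall>i<?m+2. x i = 0"
      by (auto simp: less_Suc_eq numeral_2_eq_2)
    thus "(\<forall>i<?m+2. x i = 0) \<and> \<alpha> = 0" using a0 by simp
  qed
qed

lemma anti_NS2:
  "\<forall>x. (\<forall>i<2*k+3. mv (2*k+3) (antireg_adj (2*k+3)) x i = - x i) \<longrightarrow> (\<forall>i<2*k+3. x i = 0)"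
proof (rule allI, rule impI)
  let ?m = "2*k+1"
  have m2: "2 * k + 3 = ?m + 2" by simp
  fix x assume h0: "\<forall>i<2*k+3. mv (2*k+3) (antireg_adj (2*k+3)) x i = - x i"
  have h: "\<forall>i<?m+2. mv (?m+2) (antireg_adj (?m+2)) x i = - x i" using h0 unfolding m2 .
  have sum2: "(\<Sum>i<?m+2. x i) = (\<Sum>i<?m. x i) + x ?m + x (?m+1)" by (simp add: numeral_2_eq_2)
  have "(\<Sum>l<?m+1. x l) = - x (?m+1)" using h[rule_format, of "?m+1"] anti_mv_w[of ?m x] by simp
  hence s: "(\<Sum>i<?m+2. x i) = 0" by (simp add: numeral_2_eq_2)
  have u: "x (?m+1) = - x ?m" using h[rule_format, of "?m"] anti_mv_u[of ?m x] by simp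
  have old: "\<forall>i<?m. mv ?m (antireg_adj ?m) x i + x i = - x (?m+1)"
  proof (intro allI impI)
    fix i assume i: "i < ?m"
    have "mv (?m+2) (antireg_adj (?m+2)) x i = - x i" using h i by simp
    moreover have "mv (?m+2) (antireg_adj (?m+2)) x i = mv ?m (antireg_adj ?m) x i + x (?m+1)"
      by (rule anti_mv_old[OF i])
    ultimately show "mv ?m (antireg_adj ?m) x i + x i = - x (?m+1)" by linarith
  qed
  have s0: "(\<Sum>i<?m. x i) = 0" using s sum2 u by simp
  have "(\<forall>i<?m. x i = 0) \<and> - x (?m+1) = 0" using anti_strong[of k] old s0 by blast
  hence "\<forall>i<?m. x i = 0" "x (?m+1) = 0" by auto
  moreover have "x ?m = 0" using u calculation by simp
  ultimately have "\<forall>i<?m+2. x i = 0" by (auto simp: less_Suc_eq numeral_2_eq_2)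
  thus "\<forall>i<2*k+3. x i = 0" unfolding m2 .
qed

lemma interlace_cnt:
  assumes SA: "symm n A" and SB: "symm m B" and em: "embedding n m \<sigma>"
    and B: "\<And>a b. a < m \<Longrightarrow> b < m \<Longrightarrow> B $$ (a,b) = A $$ (\<sigma> a, \<sigma> b)"
  shows "cnt B (\<lambda>x. x \<le> r) \<le> cnt A (\<lambda>x. x \<le> r)"
    and "cnt B (\<lambda>x. x < r) \<le> cnt A (\<lambda>x. x < r)"
    and "cnt B (\<lambda>x. x \<ge> r) \<le> cnt A (\<lambda>x. x \<ge> r)"
    and "cnt B (\<lambda>x. x > r) \<le> cnt A (\<lambda>x. x > r)"
proof -
  obtain PA dA where sdA: "spec_data n A PA dA" and cA: "\<forall>Q. cnt A Q = card {j. j < n \<and> Q (dA j)}"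
    using spec_cnt[OF SA] by blast
  obtain PB dB where sdB: "spec_data m B PB dB" and cB: "\<forall>Q. cnt B Q = card {j. j < m \<and> Q (dB j)}"
    using spec_cnt[OF SB] by blast
  note I = interlace_cards[OF SA sdA SB sdB em B]
  show "cnt B (\<lambda>x. x \<le> r) \<le> cnt A (\<lambda>x. x \<le> r)" using I(1) cA cB by simp
  show "cnt B (\<lambda>x. x < r) \<le> cnt A (\<lambda>x. x < r)" using I(2) cA cB by simp
  show "cnt B (\<lambda>x. x \<ge> r) \<le> cnt A (\<lambda>x. x \<ge> r)" using I(3) cA cB by simp
  show "cnt B (\<lambda>x. x > r) \<le> cnt A (\<lambda>x. x > r)" using I(4) cA cB by simp
qed

lemma mult_lower_cnt:
  fixes y :: "'k \<Rightarrow> nat \<Rightarrow> real"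
  assumes SA: "symm n A" and K: "finite K" and iK: "indep n K y"
    and ev: "\<And>k i. k \<in> K \<Longrightarrow> i < n \<Longrightarrow> mv n A (y k) i = e * y k i"
  shows "card K \<le> cnt A (\<lambda>x. x = e)"
proof -
  obtain PA dA where sdA: "spec_data n A PA dA" and cA: "\<forall>Q. cnt A Q = card {j. j < n \<and> Q (dA j)}"
    using spec_cnt[OF SA] by blast
  show ?thesis using mult_lower[OF SA sdA K iK ev] cA by simp
qed

lemma cnt_ge_gt:
  assumes "c \<notin> set (eigs A)"
  shows "cnt A (\<lambda>x. x \<ge> c) = cnt A (\<lambda>x. x > c)"
    and "cnt A (\<lambda>x. x \<le> c) = cnt A (\<lambda>x. x < c)"
proof -
  have h: "\<forall>x\<in>set (eigs A). x \<noteq> c" using assms by auto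
  show "cnt A (\<lambda>x. x \<ge> c) = cnt A (\<lambda>x. x > c)"
    unfolding cnt_def using h by (intro arg_cong[where f=length] filter_cong) (auto simp: less_le)
  show "cnt A (\<lambda>x. x \<le> c) = cnt A (\<lambda>x. x < c)"
    unfolding cnt_def using h by (intro arg_cong[where f=length] filter_cong) (auto simp: less_le)
qed

lemma cnt_split:
  "cnt A (\<lambda>x. x \<ge> c) = cnt A (\<lambda>x. x > c) + cnt A (\<lambda>x. x = c)"
  "cnt A (\<lambda>x. x \<le> c) = cnt A (\<lambda>x. x < c) + cnt A (\<lambda>x. x = c)"
proof -
  have "cnt A (\<lambda>x. x \<ge> c) = cnt A (\<lambda>x. x > c \<or> x = c)"
    unfolding cnt_def by (intro length_filter_cong) auto
  thus "cnt A (\<lambda>x. x \<ge> c) = cnt A (\<lambda>x. x > c) + cnt A (\<lambda>x. x = c)"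
    unfolding cnt_def by (simp add: length_filter_disj)
  have "cnt A (\<lambda>x. x \<le> c) = cnt A (\<lambda>x. x < c \<or> x = c)"
    unfolding cnt_def by (intro length_filter_cong) auto
  thus "cnt A (\<lambda>x. x \<le> c) = cnt A (\<lambda>x. x < c) + cnt A (\<lambda>x. x = c)"
    unfolding cnt_def by (simp add: length_filter_disj)
qed

lemma antireg_sub:
  shows "embedding (m+1) m Suc"
    and "\<And>a b. a < m \<Longrightarrow> b < m \<Longrightarrow> antireg_adj m $$ (a,b) = antireg_adj (m+1) $$ (Suc a, Suc b)"
proof -
  show "embedding (m+1) m Suc" by unfold_locales auto
  fix a b assume ab: "a < m" "b < m"
  have "antireg_adj (m+1) $$ (Suc a, Suc b) = (if Suc a \<noteq> Suc b \<and> odd (m+1 + max (Suc a) (Suc b)) then 1 else 0)"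
    by (rule antireg_entry) (use ab in auto)
  moreover have "antireg_adj m $$ (a,b) = (if a \<noteq> b \<and> odd (m + max a b) then 1 else 0)"
    by (rule antireg_entry) (use ab in auto)
  moreover have "odd (m+1 + max (Suc a) (Suc b)) = odd (m + max a b)" by (simp add: max_def)
  ultimately show "antireg_adj m $$ (a,b) = antireg_adj (m+1) $$ (Suc a, Suc b)" by simp
qed

lemma single_tw_indep: "a \<noteq> c \<Longrightarrow> c < N \<Longrightarrow> indep N {0::nat} (\<lambda>_. tw a c)"
  using tw_indep[of "{0::nat}" "\<lambda>_. c" N "\<lambda>_. a"] by auto

lemma twin_anti:
  assumes m: "2 \<le> m"
  shows "1 \<le> cnt (antireg_adj m) (\<lambda>x. x = (if odd m then 0 else -1))"
proof -
  let ?b = "antireg_string m"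
  have lb: "length ?b = m" by (rule antireg_len)
  have b1: "?b ! 1 = (if odd (m + 1) then 1 else 0)" by (rule antireg_nth) (use m in auto)
  have ev: "\<forall>i<length ?b. mv (length ?b) (threshold_adj ?b) (tw 0 1) i
           = (if ?b ! 1 = 1 then -1 else 0) * tw 0 1 i"
  proof (rule twin_eig)
    show "0 < (1::nat)" by simp
    show "1 < length ?b" using m lb by simp
    fix w :: nat assume "0 < w" "w \<le> 1"
    hence "w = 1" by simp
    thus "?b ! w = ?b ! 1" by simp
  qed simp
  have e: "(if ?b ! 1 = 1 then -1 else 0) = (if odd m then 0 else (-1::real))" using b1 by auto
  have "card {0::nat} \<le> cnt (antireg_adj m) (\<lambda>x. x = (if odd m then 0 else -1))"
  proof (rule mult_lower_cnt[where y = "\<lambda>_. tw 0 1"])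
    show "symm m (antireg_adj m)" by (rule antireg_symm)
    show "indep m {0::nat} (\<lambda>_. tw 0 1)" by (rule single_tw_indep) (use m in auto)
    fix k i assume i: "i < m"
    have "mv m (antireg_adj m) (tw 0 1) i = mv (length ?b) (threshold_adj ?b) (tw 0 1) i"
      unfolding antireg_adj_def lb ..
    also have "\<dots> = (if ?b ! 1 = 1 then -1 else 0) * tw 0 1 i" using ev i lb by simp
    also have "\<dots> = (if odd m then 0 else -1) * tw 0 1 i" using e by simp
    finally show "mv m (antireg_adj m) (tw 0 1) i = (if odd m then 0 else -1) * tw 0 1 i" .
  qed simp
  thus ?thesis by simp
qed

definition odd_facts :: "nat \<Rightarrow> bool" where
  "odd_facts k \<longleftrightarrow> k \<le> cnt (antireg_adj (2*k+1)) (\<lambda>x. x < -1) \<and> k \<le> cnt (antireg_adj (2*k+1)) (\<lambda>x. x > 0)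
     \<and> 1 \<le> cnt (antireg_adj (2*k+1)) (\<lambda>x. x = 0)"

definition even_facts :: "nat \<Rightarrow> bool" where
  "even_facts k \<longleftrightarrow> k \<le> cnt (antireg_adj (2*k+2)) (\<lambda>x. x < -1) \<and> 1 \<le> cnt (antireg_adj (2*k+2)) (\<lambda>x. x = -1)
     \<and> k + 1 \<le> cnt (antireg_adj (2*k+2)) (\<lambda>x. x > 0)"

lemma odd_facts_0: "odd_facts 0"
proof -
  let ?y = "\<lambda>(_::nat) (i::nat). if i = 0 then 1 else (0::real)"
  have "card {0::nat} \<le> cnt (antireg_adj 1) (\<lambda>x. x = 0)"
  proof (rule mult_lower_cnt[where y = ?y])
    show "symm 1 (antireg_adj 1)" by (rule antireg_symm)
    show "indep 1 {0::nat} ?y" unfolding indep_def by auto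
    fix k i assume "k \<in> {0::nat}" "i < (1::nat)"
    thus "mv 1 (antireg_adj 1) (?y k) i = 0 * ?y k i" unfolding mv_def by (simp add: antireg_entry)
  qed simp
  thus ?thesis unfolding odd_facts_def by simp
qed

lemma odd_to_even:
  assumes "odd_facts k"
  shows "even_facts k"
proof -
  let ?n = "2*k+2" and ?m = "2*k+1"
  have n: "?n = ?m + 1" by simp
  have SA: "symm ?n (antireg_adj ?n)" by (rule antireg_symm)
  have SB: "symm ?m (antireg_adj ?m)" by (rule antireg_symm)
  note I = interlace_cnt[OF SA SB antireg_sub(1)[of ?m, folded n] antireg_sub(2)[of _ ?m, folded n]]
  have o: "k \<le> cnt (antireg_adj ?m) (\<lambda>x. x < -1)" "k \<le> cnt (antireg_adj ?m) (\<lambda>x. x > 0)"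
    "1 \<le> cnt (antireg_adj ?m) (\<lambda>x. x = 0)" using assms unfolding odd_facts_def by auto
  have 1: "k \<le> cnt (antireg_adj ?n) (\<lambda>x. x < -1)" using I(2)[of "-1"] o(1) by simp
  have 2: "1 \<le> cnt (antireg_adj ?n) (\<lambda>x. x = -1)" using twin_anti[of ?n] by simp
  have "0 \<notin> set (eigs (antireg_adj ?n))"
  proof (rule not_eig_by_kernel[OF antireg_carrier])
    fix x assume "\<forall>i<?n. mv ?n (antireg_adj ?n) x i = 0 * x i"
    thus "\<forall>i<?n. x i = 0" using anti_NS1[of "k+1"] by (simp add: algebra_simps)
  qed
  hence "cnt (antireg_adj ?n) (\<lambda>x. x \<ge> 0) = cnt (antireg_adj ?n) (\<lambda>x. x > 0)" by (rule cnt_ge_gt)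
  moreover have "cnt (antireg_adj ?m) (\<lambda>x. x \<ge> 0) \<le> cnt (antireg_adj ?n) (\<lambda>x. x \<ge> 0)" by (rule I(3))
  moreover have "cnt (antireg_adj ?m) (\<lambda>x. x \<ge> 0) \<ge> k + 1" using o(2,3) cnt_split(1)[of "antireg_adj ?m" 0] by simp
  ultimately have 3: "k + 1 \<le> cnt (antireg_adj ?n) (\<lambda>x. x > 0)" by simp
  show ?thesis unfolding even_facts_def using 1 2 3 by simp
qed

lemma even_to_odd:
  assumes "even_facts k"
  shows "odd_facts (k+1)"
proof -
  let ?n = "2*k+3" and ?m = "2*k+2"
  have n: "?n = ?m + 1" by simp
  have n2: "2 * (k+1) + 1 = ?n" by simp
  have SA: "symm ?n (antireg_adj ?n)" by (rule antireg_symm)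
  have SB: "symm ?m (antireg_adj ?m)" by (rule antireg_symm)
  note I = interlace_cnt[OF SA SB antireg_sub(1)[of ?m, folded n] antireg_sub(2)[of _ ?m, folded n]]
  have e: "k \<le> cnt (antireg_adj ?m) (\<lambda>x. x < -1)" "1 \<le> cnt (antireg_adj ?m) (\<lambda>x. x = -1)"
    "k + 1 \<le> cnt (antireg_adj ?m) (\<lambda>x. x > 0)" using assms unfolding even_facts_def by auto
  have "-1 \<notin> set (eigs (antireg_adj ?n))"
  proof (rule not_eig_by_kernel[OF antireg_carrier])
    fix x assume "\<forall>i<?n. mv ?n (antireg_adj ?n) x i = -1 * x i"
    thus "\<forall>i<?n. x i = 0" using anti_NS2[of k] by simp
  qed
  hence "cnt (antireg_adj ?n) (\<lambda>x. x \<le> -1) = cnt (antireg_adj ?n) (\<lambda>x. x < -1)" by (rule cnt_ge_gt)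
  moreover have "cnt (antireg_adj ?m) (\<lambda>x. x \<le> -1) \<le> cnt (antireg_adj ?n) (\<lambda>x. x \<le> -1)" by (rule I(1))
  moreover have "cnt (antireg_adj ?m) (\<lambda>x. x \<le> -1) \<ge> k + 1" using e(1,2) cnt_split(2)[of "antireg_adj ?m" "-1"] by simp
  ultimately have 1: "k + 1 \<le> cnt (antireg_adj ?n) (\<lambda>x. x < -1)" by simp
  have 2: "k + 1 \<le> cnt (antireg_adj ?n) (\<lambda>x. x > 0)" using I(4)[of 0] e(3) by simp
  have 3: "1 \<le> cnt (antireg_adj ?n) (\<lambda>x. x = 0)" using twin_anti[of ?n] by simp
  show ?thesis unfolding odd_facts_def n2 using 1 2 3 by simp
qed

lemma all_odd_facts: "odd_facts k"
proof (induct k)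
  case 0 show ?case by (rule odd_facts_0)
next
  case (Suc k) show ?case using even_to_odd[OF odd_to_even[OF Suc]] by simp
qed

lemma anti_odd:
  "k \<le> cnt (antireg_adj (2*k+1)) (\<lambda>x. x < -1)" "k \<le> cnt (antireg_adj (2*k+1)) (\<lambda>x. x > 0)"
  using all_odd_facts[of k] unfolding odd_facts_def by auto

lemma anti_even:
  assumes "1 \<le> k"
  shows "k - 1 \<le> cnt (antireg_adj (2*k)) (\<lambda>x. x < -1)" "k \<le> cnt (antireg_adj (2*k)) (\<lambda>x. x > 0)"
proof -
  obtain j where k: "k = j + 1" using assms by (metis add.commute le_Suc_ex)
  have "even_facts j" by (rule odd_to_even[OF all_odd_facts])
  moreover have "2 * k = 2 * j + 2" using k by simp
  ultimately show "k - 1 \<le> cnt (antireg_adj (2*k)) (\<lambda>x. x < -1)" "k \<le> cnt (antireg_adj (2*k)) (\<lambda>x. x > 0)"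
    unfolding even_facts_def using k by auto
qed



lemma consec_mono:
  assumes "\<And>j. Suc j < M \<Longrightarrow> (\<sigma> :: nat \<Rightarrow> nat) j < \<sigma> (Suc j)"
  shows "a < c \<Longrightarrow> c < M \<Longrightarrow> \<sigma> a < \<sigma> c"
proof (induct c)
  case 0 thus ?case by simp
next
  case (Suc c)
  show ?case
  proof (cases "a = c")
    case True thus ?thesis using assms Suc by simp
  next
    case False
    hence "\<sigma> a < \<sigma> c" using Suc by simp
    also have "\<sigma> c < \<sigma> (Suc c)" using assms Suc by simp
    finally show ?thesis .
  qed
qed

lemma threshold_sub:
  fixes b hb :: "nat list"
  assumes mono: "\<And>a c. a < c \<Longrightarrow> c < length hb \<Longrightarrow> \<sigma> a < \<sigma> c"
    and rng: "\<And>j. j < length hb \<Longrightarrow> \<sigma> j < length b"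
    and lab: "\<And>j. 0 < j \<Longrightarrow> j < length hb \<Longrightarrow> (b ! \<sigma> j = 1) = (hb ! j = 1)"
  shows "embedding (length b) (length hb) \<sigma>"
    and "\<And>a c. a < length hb \<Longrightarrow> c < length hb \<Longrightarrow>
           threshold_adj hb $$ (a,c) = threshold_adj b $$ (\<sigma> a, \<sigma> c)"
proof -
  have inj: "inj_on \<sigma> {..<length hb}"
  proof (rule inj_onI)
    fix a c assume "a \<in> {..<length hb}" "c \<in> {..<length hb}" "\<sigma> a = \<sigma> c"
    thus "a = c" using mono[of a c] mono[of c a] by (cases a c rule: linorder_cases) auto
  qed
  show "embedding (length b) (length hb) \<sigma>"
    by unfold_locales (use inj rng in auto)
  fix a c assume a: "a < length hb" and c: "c < length hb"
  show "threshold_adj hb $$ (a,c) = threshold_adj b $$ (\<sigma> a, \<sigma> c)"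
  proof (cases "a = c")
    case True thus ?thesis using a c rng by (simp add: threshold_entry)
  next
    case False
    have ne: "\<sigma> a \<noteq> \<sigma> c" using inj a c False by (auto dest: inj_onD)
    have mx: "max (\<sigma> a) (\<sigma> c) = \<sigma> (max a c)"
      using mono[of a c] mono[of c a] a c False by (auto simp: max_def)
    have "0 < max a c" using False by (auto simp: max_def)
    hence "(b ! \<sigma> (max a c) = 1) = (hb ! max a c = 1)" using lab a c by (auto simp: max_def)
    thus ?thesis using a c rng False ne mx by (simp add: threshold_entry)
  qed
qed

lemma nat_cases_2:
  fixes j :: nat
  obtains "j = 0" | i where "j = 2*i+1" | i where "j = 2*i+2"
proof -
  consider "j = 0" | "odd j" | "even j" "j \<noteq> 0" by auto
  thus ?thesis
  proof cases
    case 1 thus ?thesis using that(1) by simp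
  next
    case 2 then obtain i where "j = 2*i+1" by (auto elim: oddE)
    thus ?thesis using that(2) by simp
  next
    case 3 then obtain i' where "j = 2*i'" by (auto elim: evenE)
    with 3 obtain i where "j = 2*i+2" by (cases i') auto
    thus ?thesis using that(3) by simp
  qed
qed

lemma nat_cases_2':
  fixes j :: nat
  obtains i where "j = 2*i" | i where "j = 2*i+1"
  by (metis oddE evenE)

locale blocks =
  fixes k :: nat and s t :: "nat \<Rightarrow> nat"
  assumes k1: "1 \<le> k" and st: "\<forall>i<k. 1 \<le> s i \<and> 1 \<le> t i"
begin

abbreviation "bs \<equiv> block_string k s t"
abbreviation "ofs \<equiv> off s t"

lemma s1: "i < k \<Longrightarrow> 1 \<le> s i" using st by auto
lemma t1: "i < k \<Longrightarrow> 1 \<le> t i" using st by auto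

lemma len_bs: "length bs = ofs k" by (rule block_string_len)

lemma bs_zero: "i < k \<Longrightarrow> r < s i \<Longrightarrow> bs ! (ofs i + r) = 0"
  using block_string_nth[of i k r s t] by simp

lemma bs_one: "i < k \<Longrightarrow> s i \<le> r \<Longrightarrow> r < s i + t i \<Longrightarrow> bs ! (ofs i + r) = 1"
  using block_string_nth[of i k r s t] by simp

lemma pos_lt: "i < k \<Longrightarrow> r < s i + t i \<Longrightarrow> ofs i + r < length bs"
  unfolding len_bs by (rule off_lt)

definition sig1 :: "nat \<Rightarrow> nat" where
  "sig1 j = (if j = 0 then 0 else if odd j then ofs ((j-1) div 2) + (if j = 1 then 1 else 0)
             else ofs ((j-2) div 2) + s ((j-2) div 2))"

lemma sig1_0: "sig1 0 = 0" unfolding sig1_def by simp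
lemma sig1_odd: "sig1 (2*i+1) = ofs i + (if i = 0 then 1 else 0)" unfolding sig1_def by simp
lemma sig1_even: "sig1 (2*i+2) = ofs i + s i" unfolding sig1_def by simp
lemmas sig1_simps[simp] = sig1_odd[simplified] sig1_even[simplified]

lemma sig1_props:
  assumes s0: "2 \<le> s 0"
  shows "embedding (length bs) (2*k+1) sig1"
    and "\<And>a c. a < 2*k+1 \<Longrightarrow> c < 2*k+1 \<Longrightarrow>
           antireg_adj (2*k+1) $$ (a,c) = threshold_adj bs $$ (sig1 a, sig1 c)"
proof -
  have lh: "length (antireg_string (2*k+1)) = 2*k+1" by (rule antireg_len)
  have cons: "sig1 j < sig1 (Suc j)" if j: "Suc j < 2*k+1" for j
  proof (cases j rule: nat_cases_2)
    case 1 thus ?thesis by (simp add: sig1_0 sig1_odd[of 0, simplified] off_def)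
  next
    case (2 i)
    hence "Suc j = 2*i+2" by simp
    hence i: "i < k" using j by simp
    have "(if i = 0 then 1 else 0) < s i" using s0 s1[OF i] by auto
    thus ?thesis using 2 by (simp add: sig1_odd sig1_even[of i, simplified])
  next
    case (3 i)
    hence "Suc j = 2*(i+1)+1" by simp
    hence i: "i + 1 < k" using j by simp
    have "ofs i + s i < ofs (Suc i)" using t1[of i] i by (simp add: off_Suc)
    thus ?thesis using 3 sig1_odd[of "i+1"] sig1_even[of i] by simp
  qed
  have mono: "\<And>a c. a < c \<Longrightarrow> c < length (antireg_string (2*k+1)) \<Longrightarrow> sig1 a < sig1 c"
    unfolding lh by (rule consec_mono) (use cons in auto)
  have rng: "sig1 j < length bs" if j: "j < length (antireg_string (2*k+1))" for j
  proof (cases j rule: nat_cases_2)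
    case 1
    have "ofs 0 + 0 < length bs" by (rule pos_lt) (use k1 s1[of 0] in auto)
    hence "0 < length bs" by (simp add: off_def)
    thus ?thesis using 1 by (simp add: sig1_0)
  next
    case (2 i)
    hence i: "i < k" using j lh by simp
    have "ofs i + (if i = 0 then 1 else 0) < length bs"
      by (rule pos_lt[OF i]) (use s0 s1[OF i] t1[OF i] in auto)
    thus ?thesis using 2 by (simp add: sig1_odd)
  next
    case (3 i)
    hence i: "i < k" using j lh by simp
    have "ofs i + s i < length bs" by (rule pos_lt[OF i]) (use t1[OF i] in auto)
    thus ?thesis using 3 by (simp add: sig1_even)
  qed
  have lab: "(bs ! sig1 j = 1) = (antireg_string (2*k+1) ! j = 1)"
    if j0: "0 < j" and j: "j < length (antireg_string (2*k+1))" for j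
  proof -
    have hj: "antireg_string (2*k+1) ! j = (if odd (2*k+1 + j) then 1 else 0)"
      by (rule antireg_nth) (use j0 j lh in auto)
    show ?thesis
    proof (cases j rule: nat_cases_2)
      case 1 thus ?thesis using j0 by simp
    next
      case (2 i)
      hence i: "i < k" using j lh by simp
      have "bs ! (ofs i + (if i = 0 then 1 else 0)) = 0"
        by (rule bs_zero[OF i]) (use s0 s1[OF i] in auto)
      thus ?thesis using 2 hj by (simp add: sig1_odd)
    next
      case (3 i)
      hence i: "i < k" using j lh by simp
      have "bs ! (ofs i + s i) = 1" by (rule bs_one[OF i]) (use t1[OF i] in auto)
      thus ?thesis using 3 hj by (simp add: sig1_even)
    qed
  qed
  note T = threshold_sub[of "antireg_string (2*k+1)" sig1 bs, OF mono rng lab]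
  show "embedding (length bs) (2*k+1) sig1" using T(1) unfolding lh .
  fix a c assume "a < 2*k+1" "c < 2*k+1"
  thus "antireg_adj (2*k+1) $$ (a,c) = threshold_adj bs $$ (sig1 a, sig1 c)"
    using T(2) unfolding antireg_adj_def lh by simp
qed

definition sig2 :: "nat \<Rightarrow> nat" where
  "sig2 j = (if even j then ofs (j div 2) else ofs (j div 2) + s (j div 2))"

lemma sig2_even: "sig2 (2*i) = ofs i" unfolding sig2_def by simp
lemma sig2_odd: "sig2 (2*i+1) = ofs i + s i" unfolding sig2_def by simp
lemmas sig2_simps[simp] = sig2_odd[simplified] sig2_even[simplified]

lemma sig2_props:
  shows "embedding (length bs) (2*k) sig2"
    and "\<And>a c. a < 2*k \<Longrightarrow> c < 2*k \<Longrightarrow>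
           antireg_adj (2*k) $$ (a,c) = threshold_adj bs $$ (sig2 a, sig2 c)"
proof -
  have lh: "length (antireg_string (2*k)) = 2*k" by (rule antireg_len)
  have cons: "sig2 j < sig2 (Suc j)" if j: "Suc j < 2*k" for j
  proof (cases j rule: nat_cases_2')
    case (1 i)
    hence i: "i < k" using j by simp
    have "Suc j = 2*i+1" using 1 by simp
    thus ?thesis using 1 s1[OF i] sig2_even[of i] sig2_odd[of i] by simp
  next
    case (2 i)
    hence "Suc j = 2*(i+1)" by simp
    hence i: "i + 1 < k" using j by simp
    have "ofs i + s i < ofs (Suc i)" using t1[of i] i by (simp add: off_Suc)
    thus ?thesis using 2 sig2_even[of "i+1"] sig2_odd[of i] by simp
  qed
  have mono: "\<And>a c. a < c \<Longrightarrow> c < length (antireg_string (2*k)) \<Longrightarrow> sig2 a < sig2 c"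
    unfolding lh by (rule consec_mono) (use cons in auto)
  have rng: "sig2 j < length bs" if j: "j < length (antireg_string (2*k))" for j
  proof (cases j rule: nat_cases_2')
    case (1 i)
    hence i: "i < k" using j lh by simp
    have "ofs i + 0 < length bs" by (rule pos_lt[OF i]) (use s1[OF i] in auto)
    thus ?thesis using 1 by (simp add: sig2_even)
  next
    case (2 i)
    hence i: "i < k" using j lh by simp
    have "ofs i + s i < length bs" by (rule pos_lt[OF i]) (use t1[OF i] in auto)
    thus ?thesis using 2 by (simp add: sig2_odd)
  qed
  have lab: "(bs ! sig2 j = 1) = (antireg_string (2*k) ! j = 1)"
    if j0: "0 < j" and j: "j < length (antireg_string (2*k))" for j
  proof -
    have hj: "antireg_string (2*k) ! j = (if odd (2*k + j) then 1 else 0)"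
      by (rule antireg_nth) (use j0 j lh in auto)
    show ?thesis
    proof (cases j rule: nat_cases_2')
      case (1 i)
      hence i: "i < k" using j lh by simp
      have "bs ! (ofs i + 0) = 0" by (rule bs_zero[OF i]) (use s1[OF i] in auto)
      thus ?thesis using 1 hj by (simp add: sig2_even)
    next
      case (2 i)
      hence i: "i < k" using j lh by simp
      have "bs ! (ofs i + s i) = 1" by (rule bs_one[OF i]) (use t1[OF i] in auto)
      thus ?thesis using 2 hj by (simp add: sig2_odd)
    qed
  qed
  note T = threshold_sub[of "antireg_string (2*k)" sig2 bs, OF mono rng lab]
  show "embedding (length bs) (2*k) sig2" using T(1) unfolding lh .
  fix a c assume "a < 2*k" "c < 2*k"
  thus "antireg_adj (2*k) $$ (a,c) = threshold_adj bs $$ (sig2 a, sig2 c)"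
    using T(2) unfolding antireg_adj_def lh by simp
qed


lemma G_symm: "symm (length bs) (threshold_adj bs)" by (rule threshold_symm)

lemma pos_decomp: "ofs i \<le> w \<Longrightarrow> w = ofs i + (w - ofs i)" by simp

definition K0 :: "(nat \<times> nat) set" where
  "K0 = {(i,r). i < k \<and> 1 \<le> r \<and> r < s i}"

lemma K0_Sigma: "K0 = Sigma {..<k} (\<lambda>i. {1..<s i})"
  unfolding K0_def by auto

lemma K0_fin: "finite K0" unfolding K0_Sigma by auto

lemma K0_card: "card K0 = (\<Sum>i<k. s i) - k"
proof -
  have "card K0 = (\<Sum>i<k. s i - 1)" unfolding K0_Sigma by (simp add: card_SigmaI)
  also have "\<dots> = (\<Sum>i<k. s i) - (\<Sum>i<k. (1::nat))"
    by (rule sum_subtractf_nat) (use s1 in auto)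
  finally show ?thesis by simp
qed

lemma zero_twins: "(\<Sum>i<k. s i) - k \<le> cnt (threshold_adj bs) (\<lambda>x. x = 0)"
proof -
  have "card K0 \<le> cnt (threshold_adj bs) (\<lambda>x. x = 0)"
  proof (rule mult_lower_cnt[OF G_symm K0_fin, where y = "\<lambda>(i,r). tw (ofs i) (ofs i + r)"])
    show "indep (length bs) K0 (\<lambda>(i,r). tw (ofs i) (ofs i + r))"
    proof -
      have "indep (length bs) K0 (\<lambda>\<kappa>. tw ((\<lambda>(i,r). ofs i) \<kappa>) ((\<lambda>(i,r). ofs i + r) \<kappa>))"
      proof (rule tw_indep[OF K0_fin])
        show "inj_on (\<lambda>(i,r). ofs i + r) K0"
        proof (rule inj_onI, clarify)
          fix i r i' r' assume "(i,r) \<in> K0" "(i',r') \<in> K0" "ofs i + r = ofs i' + r'"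
          thus "i = i' \<and> r = r'" unfolding K0_def by (intro pos_inj[where s=s and t=t]) auto
        qed
        show "\<forall>\<kappa>\<in>K0. (\<lambda>(i,r). ofs i + r) \<kappa> < length bs"
          unfolding K0_def by (auto intro!: pos_lt)
        show "\<forall>\<kappa>\<in>K0. (\<lambda>(i,r). ofs i) \<kappa> \<notin> (\<lambda>(i,r). ofs i + r) ` K0"
        proof (clarify)
          fix i r i' r' assume ir: "(i,r) \<in> K0" and ir': "(i',r') \<in> K0" and e: "ofs i = ofs i' + r'"
          have "i = i' \<and> 0 = r'" using ir ir' e unfolding K0_def
            by (intro pos_inj[where s=s and t=t]) (auto dest: s1)
          thus False using ir' unfolding K0_def by auto
        qed
      qed
      thus ?thesis by (simp add: case_prod_beta')
    qed
  next
    fix \<kappa> j assume kap: "\<kappa> \<in> K0" and j: "j < length bs"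
    obtain i r where ir: "\<kappa> = (i,r)" "i < k" "1 \<le> r" "r < s i" using kap unfolding K0_def by auto
    have c0: "bs ! (ofs i + r) = 0" by (rule bs_zero) (use ir in auto)
    have "\<forall>j<length bs. mv (length bs) (threshold_adj bs) (tw (ofs i) (ofs i + r)) j
           = (if bs ! (ofs i + r) = 1 then -1 else 0) * tw (ofs i) (ofs i + r) j"
    proof (rule twin_eig)
      show "ofs i < ofs i + r" using ir by simp
      show "ofs i + r < length bs" by (rule pos_lt) (use ir in auto)
      fix w assume w: "ofs i < w" "w \<le> ofs i + r"
      have "bs ! (ofs i + (w - ofs i)) = 0" by (rule bs_zero) (use ir w in auto)
      thus "bs ! w = bs ! (ofs i + r)" using c0 w by simp
    next
      have "bs ! (ofs i + 0) = 0" by (rule bs_zero) (use ir in auto)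
      thus "bs ! ofs i = bs ! (ofs i + r)" using c0 by simp
    qed
    thus "mv (length bs) (threshold_adj bs) ((\<lambda>(i,r). tw (ofs i) (ofs i + r)) \<kappa>) j
          = 0 * (\<lambda>(i,r). tw (ofs i) (ofs i + r)) \<kappa> j" using ir c0 j by simp
  qed
  thus ?thesis using K0_card by simp
qed

definition lo :: "nat \<Rightarrow> nat" where
  "lo i = (if i = 0 \<and> s 0 = 1 then 0 else 1)"

definition an :: "nat \<Rightarrow> nat" where
  "an i = (if i = 0 \<and> s 0 = 1 then 0 else ofs i + s i)"

definition K1 :: "(nat \<times> nat) set" where
  "K1 = {(i,r). i < k \<and> lo i \<le> r \<and> r < t i}"

lemma K1_Sigma: "K1 = Sigma {..<k} (\<lambda>i. {lo i..<t i})"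
  unfolding K1_def by auto

lemma K1_fin: "finite K1" unfolding K1_Sigma by auto

lemma K1_card: "card K1 = (\<Sum>i<k. t i) - k + (if s 0 = 1 then 1 else 0)"
proof -
  have "card K1 = (\<Sum>i<k. t i - lo i)" unfolding K1_Sigma by (simp add: card_SigmaI)
  also have "\<dots> = (\<Sum>i<k. t i) - (\<Sum>i<k. lo i)"
    by (rule sum_subtractf_nat) (use t1 in \<open>auto simp: lo_def\<close>)
  also have "(\<Sum>i<k. lo i) = k - (if s 0 = 1 then 1 else 0)"
  proof -
    obtain k' where k': "k = Suc k'" using k1 by (cases k) auto
    have "(\<Sum>i<k. lo i) = lo 0 + (\<Sum>i<k'. lo (Suc i))" unfolding k' by (rule sum.lessThan_Suc_shift)
    also have "(\<Sum>i<k'. lo (Suc i)) = k'" by (simp add: lo_def)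
    finally show ?thesis unfolding k' by (simp add: lo_def)
  qed
  also have "(\<Sum>i<k. t i) \<ge> k"
  proof -
    have "(\<Sum>i<k. (1::nat)) \<le> (\<Sum>i<k. t i)" by (rule sum_mono) (use t1 in auto)
    thus ?thesis by simp
  qed
  hence "(\<Sum>i<k. t i) - (k - (if s 0 = 1 then 1 else 0)) = (\<Sum>i<k. t i) - k + (if s 0 = 1 then 1 else 0)"
    using k1 by auto
  finally show ?thesis .
qed

lemma m1_twins: "(\<Sum>i<k. t i) - k + (if s 0 = 1 then 1 else 0) \<le> cnt (threshold_adj bs) (\<lambda>x. x = -1)"
proof -
  have "card K1 \<le> cnt (threshold_adj bs) (\<lambda>x. x = -1)"
  proof (rule mult_lower_cnt[OF G_symm K1_fin, where y = "\<lambda>(i,r). tw (an i) (ofs i + s i + r)"])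
    show "indep (length bs) K1 (\<lambda>(i,r). tw (an i) (ofs i + s i + r))"
    proof -
      have "indep (length bs) K1 (\<lambda>\<kappa>. tw ((\<lambda>(i,r). an i) \<kappa>) ((\<lambda>(i,r). ofs i + s i + r) \<kappa>))"
      proof (rule tw_indep[OF K1_fin])
        show "inj_on (\<lambda>(i,r). ofs i + s i + r) K1"
        proof (rule inj_onI, clarify)
          fix i r i' r' assume "(i,r) \<in> K1" "(i',r') \<in> K1" "ofs i + s i + r = ofs i' + s i' + r'"
          hence "i = i' \<and> s i + r = s i' + r'" unfolding K1_def
            by (intro pos_inj[where s=s and t=t]) (auto simp: add.assoc)
          thus "i = i' \<and> r = r'" by auto
        qed
        show "\<forall>\<kappa>\<in>K1. (\<lambda>(i,r). ofs i + s i + r) \<kappa> < length bs"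
          unfolding K1_def using pos_lt by (auto simp: add.assoc)
        show "\<forall>\<kappa>\<in>K1. (\<lambda>(i,r). an i) \<kappa> \<notin> (\<lambda>(i,r). ofs i + s i + r) ` K1"
        proof (clarify)
          fix i r i' r' assume ir: "(i,r) \<in> K1" and ir': "(i',r') \<in> K1" and e: "an i = ofs i' + s i' + r'"
          show False
          proof (cases "i = 0 \<and> s 0 = 1")
            case True
            hence "an i = 0" by (simp add: an_def)
            moreover have "1 \<le> s i'" using ir' s1 unfolding K1_def by auto
            ultimately show False using e by simp
          next
            case False
            hence "an i = ofs i + s i" unfolding an_def by (simp only: if_False)
            hence "ofs i + s i = ofs i' + (s i' + r')" using e by (simp add: add.assoc)
            hence "i = i' \<and> s i = s i' + r'" using ir ir' t1 unfolding K1_def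
              by (intro pos_inj[where s=s and t=t]) (auto simp: add.assoc)
            hence "r' = 0" "i' = i" by auto
            hence "lo i = 0" using ir' unfolding K1_def by auto
            thus False using False by (simp add: lo_def split: if_splits)
          qed
        qed
      qed
      thus ?thesis by (simp add: case_prod_beta')
    qed
  next
    fix \<kappa> j assume kap: "\<kappa> \<in> K1" and j: "j < length bs"
    obtain i r where ir: "\<kappa> = (i,r)" "i < k" "lo i \<le> r" "r < t i" using kap unfolding K1_def by auto
    have c1: "bs ! (ofs i + s i + r) = 1"
      using bs_one[of i "s i + r"] ir by (simp add: add.assoc)
    have "\<forall>j<length bs. mv (length bs) (threshold_adj bs) (tw (an i) (ofs i + s i + r)) j
           = (if bs ! (ofs i + s i + r) = 1 then -1 else 0) * tw (an i) (ofs i + s i + r) j"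
    proof (rule twin_eig)
      show "an i < ofs i + s i + r" using ir s1[of i] by (auto simp: an_def lo_def split: if_splits)
      show "ofs i + s i + r < length bs" using pos_lt[of i "s i + r"] ir by (simp add: add.assoc)
      fix w assume w: "an i < w" "w \<le> ofs i + s i + r"
      show "bs ! w = bs ! (ofs i + s i + r)"
      proof (cases "i = 0 \<and> s 0 = 1")
        case True
        hence o0: "ofs i = 0" by (simp add: off_def)
        have "bs ! (ofs i + w) = 1" by (rule bs_one) (use ir w True o0 in \<open>auto simp: an_def\<close>)
        thus ?thesis using c1 o0 by simp
      next
        case False
        hence a: "an i = ofs i + s i" by (simp add: an_def)
        have "bs ! (ofs i + (w - ofs i)) = 1" by (rule bs_one) (use ir w a in auto)
        thus ?thesis using c1 w a by simp
      qed
    next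
      assume "0 < an i"
      hence a: "an i = ofs i + s i" by (simp add: an_def split: if_splits)
      have "bs ! (ofs i + s i) = 1" by (rule bs_one) (use ir t1[of i] in auto)
      thus "bs ! an i = bs ! (ofs i + s i + r)" using a c1 by simp
    qed
    thus "mv (length bs) (threshold_adj bs) ((\<lambda>(i,r). tw (an i) (ofs i + s i + r)) \<kappa>) j
          = -1 * (\<lambda>(i,r). tw (an i) (ofs i + s i + r)) \<kappa> j" using ir c1 j by simp
  qed
  thus ?thesis using K1_card by simp
qed


lemma N_eq: "length bs = (\<Sum>i<k. s i) + (\<Sum>i<k. t i)"
  unfolding len_bs off_def by (simp add: sum.distrib)

lemma S_ge: "k \<le> (\<Sum>i<k. s i)"
proof -
  have "(\<Sum>i<k. (1::nat)) \<le> (\<Sum>i<k. s i)" by (rule sum_mono) (use s1 in auto)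
  thus ?thesis by simp
qed

lemma T_ge: "k \<le> (\<Sum>i<k. t i)"
proof -
  have "(\<Sum>i<k. (1::nat)) \<le> (\<Sum>i<k. t i)" by (rule sum_mono) (use t1 in auto)
  thus ?thesis by simp
qed

end

lemma length_partition:
  fixes L :: "real list"
  shows "length L = length (filter (\<lambda>x. x < -1) L) + length (filter (\<lambda>x. x = -1) L)
     + length (filter (\<lambda>x. -1 < x \<and> x < 0) L) + length (filter (\<lambda>x. x = 0) L) + length (filter (\<lambda>x. x > 0) L)"
  by (induct L) auto

lemma cnt_partition:
  assumes "symm n A"
  shows "n = cnt A (\<lambda>x. x < -1) + cnt A (\<lambda>x. x = -1) + cnt A (\<lambda>x. -1 < x \<and> x < 0)
     + cnt A (\<lambda>x. x = 0) + cnt A (\<lambda>x. x > 0)"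
proof -
  obtain P d where "length (eigs A) = n" using spec_cnt[OF assms] by blast
  thus ?thesis unfolding cnt_def using length_partition[of "eigs A"] by simp
qed

context blocks
begin

lemma counts_i:
  assumes s0: "2 \<le> s 0"
  shows "cnt (threshold_adj bs) (\<lambda>x. x < -1) = k"
    "cnt (threshold_adj bs) (\<lambda>x. x = -1) = (\<Sum>i<k. t i) - k"
    "cnt (threshold_adj bs) (\<lambda>x. -1 < x \<and> x < 0) = 0"
    "cnt (threshold_adj bs) (\<lambda>x. x = 0) = (\<Sum>i<k. s i) - k"
    "cnt (threshold_adj bs) (\<lambda>x. x > 0) = k"
proof -
  let ?G = "threshold_adj bs" and ?H = "antireg_adj (2*k+1)"
  note I = interlace_cnt[OF G_symm antireg_symm sig1_props(1)[OF s0] sig1_props(2)[OF s0]]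
  have c1: "k \<le> cnt ?G (\<lambda>x. x < -1)" using I(2)[of "-1"] anti_odd(1)[of k] by simp
  have c4: "k \<le> cnt ?G (\<lambda>x. x > 0)" using I(4)[of 0] anti_odd(2)[of k] by simp
  have c2: "(\<Sum>i<k. t i) - k \<le> cnt ?G (\<lambda>x. x = -1)" using m1_twins s0 by simp
  have c3: "(\<Sum>i<k. s i) - k \<le> cnt ?G (\<lambda>x. x = 0)" using zero_twins by simp
  have P: "length bs = cnt ?G (\<lambda>x. x < -1) + cnt ?G (\<lambda>x. x = -1) + cnt ?G (\<lambda>x. -1 < x \<and> x < 0)
     + cnt ?G (\<lambda>x. x = 0) + cnt ?G (\<lambda>x. x > 0)" by (rule cnt_partition[OF G_symm])
  note N = N_eq S_ge T_ge
  show "cnt ?G (\<lambda>x. x < -1) = k" using c1 c2 c3 c4 P N by linarith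
  show "cnt ?G (\<lambda>x. x = -1) = (\<Sum>i<k. t i) - k" using c1 c2 c3 c4 P N by linarith
  show "cnt ?G (\<lambda>x. -1 < x \<and> x < 0) = 0" using c1 c2 c3 c4 P N by linarith
  show "cnt ?G (\<lambda>x. x = 0) = (\<Sum>i<k. s i) - k" using c1 c2 c3 c4 P N by linarith
  show "cnt ?G (\<lambda>x. x > 0) = k" using c1 c2 c3 c4 P N by linarith
qed

lemma counts_ii:
  assumes s0: "s 0 = 1"
  shows "cnt (threshold_adj bs) (\<lambda>x. x < -1) = k - 1"
    "cnt (threshold_adj bs) (\<lambda>x. x = -1) = (\<Sum>i<k. t i) - k + 1"
    "cnt (threshold_adj bs) (\<lambda>x. -1 < x \<and> x < 0) = 0"
    "cnt (threshold_adj bs) (\<lambda>x. x = 0) = (\<Sum>i<k. s i) - k"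
    "cnt (threshold_adj bs) (\<lambda>x. x > 0) = k"
proof -
  let ?G = "threshold_adj bs" and ?H = "antireg_adj (2*k)"
  note I = interlace_cnt[OF G_symm antireg_symm sig2_props(1) sig2_props(2)]
  have c1: "k - 1 \<le> cnt ?G (\<lambda>x. x < -1)" using I(2)[of "-1"] anti_even(1)[OF k1] by simp
  have c4: "k \<le> cnt ?G (\<lambda>x. x > 0)" using I(4)[of 0] anti_even(2)[OF k1] by simp
  have c2: "(\<Sum>i<k. t i) - k + 1 \<le> cnt ?G (\<lambda>x. x = -1)" using m1_twins s0 by simp
  have c3: "(\<Sum>i<k. s i) - k \<le> cnt ?G (\<lambda>x. x = 0)" using zero_twins by simp
  have P: "length bs = cnt ?G (\<lambda>x. x < -1) + cnt ?G (\<lambda>x. x = -1) + cnt ?G (\<lambda>x. -1 < x \<and> x < 0)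
     + cnt ?G (\<lambda>x. x = 0) + cnt ?G (\<lambda>x. x > 0)" by (rule cnt_partition[OF G_symm])
  note N = N_eq S_ge T_ge k1
  show "cnt ?G (\<lambda>x. x < -1) = k - 1" using c1 c2 c3 c4 P N by linarith
  show "cnt ?G (\<lambda>x. x = -1) = (\<Sum>i<k. t i) - k + 1" using c1 c2 c3 c4 P N by linarith
  show "cnt ?G (\<lambda>x. -1 < x \<and> x < 0) = 0" using c1 c2 c3 c4 P N by linarith
  show "cnt ?G (\<lambda>x. x = 0) = (\<Sum>i<k. s i) - k" using c1 c2 c3 c4 P N by linarith
  show "cnt ?G (\<lambda>x. x > 0) = k" using c1 c2 c3 c4 P N by linarith
qed


end

lemma count_mset_filter: "count (mset xs) x = length (filter (\<lambda>y. y = x) xs)"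
  by (induct xs) auto

lemma eig_mult_cnt:
  assumes "A \<in> carrier_mat n n"
  shows "eig_mult x A = cnt A (\<lambda>y. y = x)"
proof -
  have "eig_mult x A = count (proots (char_poly A)) x"
    unfolding eig_mult_def using char_poly_nz[OF assms] by simp
  also have "\<dots> = count (mset (eigs A)) x" unfolding eigs_def by simp
  finally show ?thesis unfolding cnt_def count_mset_filter .
qed

lemma nontriv_neg_cnt: "nontriv_neg A = cnt A (\<lambda>x. x < -1) + cnt A (\<lambda>x. -1 < x \<and> x < 0)"
proof -
  have "nontriv_neg A = cnt A (\<lambda>x. x < -1 \<or> (-1 < x \<and> x < 0))"
    unfolding nontriv_neg_def cnt_def by (intro length_filter_cong) auto
  thus ?thesis unfolding cnt_def by (simp add: length_filter_disj)
qed

lemma nontriv_pos_cnt: "nontriv_pos A = cnt A (\<lambda>x. x > 0)"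
  unfolding nontriv_pos_def cnt_def ..

lemma inertia_cnt: "inertia A = (cnt A (\<lambda>x. x < -1) + cnt A (\<lambda>x. x = -1) + cnt A (\<lambda>x. -1 < x \<and> x < 0),
    cnt A (\<lambda>x. x = 0), cnt A (\<lambda>x. x > 0))"
proof -
  have "cnt A (\<lambda>x. x < 0) = cnt A (\<lambda>x. x < -1 \<or> (x = -1 \<or> (-1 < x \<and> x < 0)))"
    unfolding cnt_def by (intro length_filter_cong) auto
  also have "\<dots> = cnt A (\<lambda>x. x < -1) + cnt A (\<lambda>x. x = -1 \<or> (-1 < x \<and> x < 0))"
    unfolding cnt_def by (rule length_filter_disj) auto
  also have "cnt A (\<lambda>x. x = -1 \<or> (-1 < x \<and> x < 0)) = cnt A (\<lambda>x. x = -1) + cnt A (\<lambda>x. -1 < x \<and> x < 0)"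
    unfolding cnt_def by (rule length_filter_disj) auto
  finally show ?thesis unfolding inertia_def cnt_def by simp
qed

lemma interlace_pos:
  assumes SA: "symm n A" and SB: "symm m B" and em: "embedding n m \<sigma>"
    and B: "\<And>a b. a < m \<Longrightarrow> b < m \<Longrightarrow> B $$ (a,b) = A $$ (\<sigma> a, \<sigma> b)"
  shows "\<And>i. i < m \<Longrightarrow> eigs A ! i \<le> eigs B ! i"
    and "\<And>i. i < m \<Longrightarrow> eigs B ! i \<le> eigs A ! (n - m + i)"
proof -
  obtain PA dA where lA: "length (eigs A) = n" and sA: "sorted (eigs A)" using spec_cnt[OF SA] by blast
  obtain PB dB where lB: "length (eigs B) = m" and sB: "sorted (eigs B)" using spec_cnt[OF SB] by blast
  note I = interlace_cnt[OF SA SB em B]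
  have mn: "m \<le> n"
  proof -
    interpret embedding n m \<sigma> by (rule em)
    have "card (\<sigma> ` {..<m}) = m" using inj by (simp add: card_image)
    moreover have "card (\<sigma> ` {..<m}) \<le> n" using rng by (metis card_lessThan card_mono finite_lessThan)
    ultimately show ?thesis by simp
  qed
  fix i assume i: "i < m"
  let ?c = "eigs B ! i"
  have "Suc i \<le> cnt B (\<lambda>x. x \<le> ?c)" unfolding cnt_def by (rule sorted_self_le[OF sB]) (use i lB in simp)
  hence "Suc i \<le> cnt A (\<lambda>x. x \<le> ?c)" using I(1)[of ?c] by simp
  thus "eigs A ! i \<le> ?c" unfolding cnt_def by (rule sorted_cnt_le[OF sA]) simp
  have "m - i \<le> cnt B (\<lambda>x. x \<ge> ?c)" unfolding cnt_def using sorted_self_ge[OF sB, of i] i lB by simp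
  hence h: "m - i \<le> cnt A (\<lambda>x. x \<ge> ?c)" using I(3)[of ?c] by simp
  show "?c \<le> eigs A ! (n - m + i)"
    by (rule sorted_cnt_ge[OF sA h[unfolded cnt_def]]) (use i lA mn in auto)
qed

context blocks
begin


lemma part_i:
  assumes s0: "2 \<le> s 0"
  defines "G \<equiv> threshold_adj bs" and "H \<equiv> antireg_adj (2*k+1)"
    and "n \<equiv> (\<Sum>i<k. s i) + (\<Sum>i<k. t i)"
  shows "(\<forall>i\<in>{1..k}. eig G i \<le> eig H i \<and> eig H i < -1)
      \<and> (\<forall>i\<in>{1..k}. 0 < eig H (k+1+i) \<and> eig H (k+1+i) \<le> eig G (n-k+i))
      \<and> eig_mult (-1) G = (\<Sum>i<k. t i) - k \<and> eig_mult 0 G = (\<Sum>i<k. s i) - k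
      \<and> nontriv_neg G = k \<and> nontriv_pos G = k"
proof -
  have SH: "symm (2*k+1) H" unfolding H_def by (rule antireg_symm)
  note P = interlace_pos[OF G_symm SH[unfolded H_def] sig1_props(1)[OF s0] sig1_props(2)[OF s0], folded G_def H_def]
  obtain PH dH where lH: "length (eigs H) = 2*k+1" and sH: "sorted (eigs H)" using spec_cnt[OF SH] by blast
  have nN: "length bs = n" unfolding n_def by (rule N_eq)
  have S1: "k + 1 \<le> (\<Sum>i<k. s i)"
  proof -
    obtain k' where k': "k = Suc k'" using k1 by (cases k) auto
    have "(\<Sum>i<k. s i) = s 0 + (\<Sum>i<k'. s (Suc i))" unfolding k' by (rule sum.lessThan_Suc_shift)
    moreover have "k' \<le> (\<Sum>i<k'. s (Suc i))"
    proof -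
      have "(\<Sum>i<k'. (1::nat)) \<le> (\<Sum>i<k'. s (Suc i))" by (rule sum_mono) (use s1 k' in auto)
      thus ?thesis by simp
    qed
    ultimately show ?thesis using s0 k' by simp
  qed
  have nge: "2*k+1 \<le> n" unfolding n_def using S1 T_ge by simp
  have hneg: "k \<le> length (filter (\<lambda>x. x < -1) (eigs H))" using anti_odd(1)[of k] unfolding H_def cnt_def .
  have hpos: "k \<le> length (filter (\<lambda>x. x > 0) (eigs H))" using anti_odd(2)[of k] unfolding H_def cnt_def .
  have A: "\<forall>i\<in>{1..k}. eig G i \<le> eig H i \<and> eig H i < -1"
  proof
    fix i assume i: "i \<in> {1..k}"
    have "eigs G ! (i-1) \<le> eigs H ! (i-1)" by (rule P(1)) (use i in auto)
    moreover have "eigs H ! (i-1) < -1" by (rule sorted_cnt_lt[OF sH hneg]) (use i in auto)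
    ultimately show "eig G i \<le> eig H i \<and> eig H i < -1" unfolding eig_def by simp
  qed
  have B: "\<forall>i\<in>{1..k}. 0 < eig H (k+1+i) \<and> eig H (k+1+i) \<le> eig G (n-k+i)"
  proof
    fix i assume i: "i \<in> {1..k}"
    have "eigs H ! (k+i) > 0" by (rule sorted_cnt_gt[OF sH hpos]) (use i lH in auto)
    moreover have "eigs H ! (k+i) \<le> eigs G ! (length bs - (2*k+1) + (k+i))" by (rule P(2)) (use i in auto)
    moreover have "length bs - (2*k+1) + (k+i) = n - k + i - 1" using nN nge i by auto
    ultimately show "0 < eig H (k+1+i) \<and> eig H (k+1+i) \<le> eig G (n-k+i)" unfolding eig_def by simp
  qed
  note C = counts_i[OF s0, folded G_def]
  have Gc: "G \<in> carrier_mat (length bs) (length bs)" unfolding G_def by (rule threshold_carrier)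
  show ?thesis using A B C
    by (simp add: eig_mult_cnt[OF Gc] nontriv_neg_cnt nontriv_pos_cnt)
qed

lemma part_ii:
  assumes s0: "s 0 = 1"
  defines "G \<equiv> threshold_adj bs" and "H \<equiv> antireg_adj (2*k)"
    and "n \<equiv> (\<Sum>i<k. s i) + (\<Sum>i<k. t i)"
  shows "(\<forall>i\<in>{1..k-1}. eig G i \<le> eig H i \<and> eig H i < -1)
      \<and> (\<forall>i\<in>{1..k}. 0 < eig H (k+i) \<and> eig H (k+i) \<le> eig G (n-k+i))
      \<and> eig_mult (-1) G = (\<Sum>i<k. t i) - k + 1 \<and> eig_mult 0 G = (\<Sum>i<k. s i) - k
      \<and> nontriv_neg G = k - 1 \<and> nontriv_pos G = k"
proof -
  have SH: "symm (2*k) H" unfolding H_def by (rule antireg_symm)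
  note P = interlace_pos[OF G_symm SH[unfolded H_def] sig2_props(1) sig2_props(2), folded G_def H_def]
  obtain PH dH where lH: "length (eigs H) = 2*k" and sH: "sorted (eigs H)" using spec_cnt[OF SH] by blast
  have nN: "length bs = n" unfolding n_def by (rule N_eq)
  have nge: "2*k \<le> n" unfolding n_def using S_ge T_ge by simp
  have hneg: "k - 1 \<le> length (filter (\<lambda>x. x < -1) (eigs H))" using anti_even(1)[OF k1] unfolding H_def cnt_def .
  have hpos: "k \<le> length (filter (\<lambda>x. x > 0) (eigs H))" using anti_even(2)[OF k1] unfolding H_def cnt_def .
  have A: "\<forall>i\<in>{1..k-1}. eig G i \<le> eig H i \<and> eig H i < -1"
  proof
    fix i assume i: "i \<in> {1..k-1}"
    have "eigs G ! (i-1) \<le> eigs H ! (i-1)" by (rule P(1)) (use i in auto)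
    moreover have "eigs H ! (i-1) < -1" by (rule sorted_cnt_lt[OF sH hneg]) (use i in auto)
    ultimately show "eig G i \<le> eig H i \<and> eig H i < -1" unfolding eig_def by simp
  qed
  have B: "\<forall>i\<in>{1..k}. 0 < eig H (k+i) \<and> eig H (k+i) \<le> eig G (n-k+i)"
  proof
    fix i assume i: "i \<in> {1..k}"
    have "eigs H ! (k+i-1) > 0" by (rule sorted_cnt_gt[OF sH hpos]) (use i lH in auto)
    moreover have "eigs H ! (k+i-1) \<le> eigs G ! (length bs - (2*k) + (k+i-1))" by (rule P(2)) (use i in auto)
    moreover have "length bs - (2*k) + (k+i-1) = n - k + i - 1" using nN nge i by auto
    ultimately show "0 < eig H (k+i) \<and> eig H (k+i) \<le> eig G (n-k+i)" unfolding eig_def by simp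
  qed
  note C = counts_ii[OF s0, folded G_def]
  have Gc: "G \<in> carrier_mat (length bs) (length bs)" unfolding G_def by (rule threshold_carrier)
  show ?thesis using A B C
    by (simp add: eig_mult_cnt[OF Gc] nontriv_neg_cnt nontriv_pos_cnt)
qed

lemma part_inertia:
  "inertia (threshold_adj bs) = ((\<Sum>i<k. t i), (\<Sum>i<k. s i) - k, k)"
proof (cases "s 0 = 1")
  case True
  note C = counts_ii[OF True]
  show ?thesis unfolding inertia_cnt C using T_ge k1 by simp
next
  case False
  hence "2 \<le> s 0" using s1[of 0] k1 by simp
  note C = counts_i[OF this]
  show ?thesis unfolding inertia_cnt C using T_ge by simp
qed

end

theorem theorem4p1:
  fixes k :: nat and s t :: "nat \<Rightarrow> nat"
  assumes "k \<ge> 1"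
    and "\<forall>i<k. s i \<ge> 1 \<and> t i \<ge> 1"
  defines "G \<equiv> threshold_adj (block_string k s t)"
    and "S \<equiv> (\<Sum>i<k. s i)" and "T \<equiv> (\<Sum>i<k. t i)"
    and "n \<equiv> (\<Sum>i<k. s i) + (\<Sum>i<k. t i)"
  shows
    "(s 0 \<ge> 2 \<longrightarrow>
        (\<forall>i\<in>{1..k}. eig G i \<le> eig (antireg_adj (2*k+1)) i \<and> eig (antireg_adj (2*k+1)) i < -1)
      \<and> (\<forall>i\<in>{1..k}. 0 < eig (antireg_adj (2*k+1)) (k+1+i)
                     \<and> eig (antireg_adj (2*k+1)) (k+1+i) \<le> eig G (n-k+i))
      \<and> eig_mult (-1) G = T - k \<and> eig_mult 0 G = S - k
      \<and> nontriv_neg G = k \<and> nontriv_pos G = k)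
   \<and> (s 0 = 1 \<longrightarrow>
        (\<forall>i\<in>{1..k-1}. eig G i \<le> eig (antireg_adj (2*k)) i \<and> eig (antireg_adj (2*k)) i < -1)
      \<and> (\<forall>i\<in>{1..k}. 0 < eig (antireg_adj (2*k)) (k+i)
                     \<and> eig (antireg_adj (2*k)) (k+i) \<le> eig G (n-k+i))
      \<and> eig_mult (-1) G = T - k + 1 \<and> eig_mult 0 G = S - k
      \<and> nontriv_neg G = k - 1 \<and> nontriv_pos G = k)
   \<and> inertia G = (T, S - k, k)"
proof -
  interpret blocks k s t using assms(1,2) by unfold_locales auto
  show ?thesis unfolding G_def S_def T_def n_def
    using part_i part_ii part_inertia by blast
qed


end
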